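(* Let $(\Delta_0,\mathfrak o_0,m_0,q_0)$ be a quantized Brauer graph. Then there is a tower of quantized Brauer covering graphs $(\Delta_0,\mathfrak o_0,m_0,q_0),(\Delta_1,\mathfrak o_1,m_1,q_1),(\Delta_2,\mathfrak o_2,m_2,q_2),(\Delta_3,\mathfrak o_3,m_3,q_3)$ such that: (1) the multiplicity function $m_3$ is identically $1$; (2) the graph $\Delta_3$ has no loops; (3) the graph $\Delta_3$ has no multiple edges.
   Context: Brauer graphs. A Brauer graph $(\Delta,\mathfrak o,m)$ is a finite connected graph $\Delta$ (loops and multiple edges allowed) with vertex set (here written) $V(\Delta)$, edge set $E(\Delta)$ and at least one edge, together with a multiplicity function $m:V(\Delta)\to\mathbb Z_{\ge 1}$ and, for each vertex $\mu$, a cyclic ordering $\mathfrak o$ of the edges incident with $\mu$. A loop at $\mu$ occurs twice in the cyclic ordering at $\mu$; its two occurrences are regarded as two distinct edges (each with its own successor). Edge $j$ is the successor of edge $i$ at $\mu$ if $j$ immediately follows $i$ in the cyclic ordering at $\mu$. The valency $\operatorname{val}(\mu)$ is the number of edges incident with $\mu$, loops counted twice; if $\operatorname{val}(\mu)=1$ the unique edge at $\mu$ is its own successor. An edge $i$ is truncated at its endpoint $\mu$ if $\operatorname{val}(\mu)=1$ and $m(\mu)=1$. Fix a field $K$. A quantized Brauer graph $(\Delta,\mathfrak o,m,q)$ is a Brauer graph with a function $q:\mathcal X_\Delta\to K\setminus\{0\}$, $(i,\mu)\mapsto q_{i,\mu}$, where $\mathcal X_\Delta$ is the set of pairs $(i,\mu)$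 with $\mu$ an endpoint of $i$ and $i$ not truncated at either of its endpoints. Successor weightings. Let $G$ be a finite abelian group. For a vertex $\mu$ let $\mathcal Z_\mu$ be the set of pairs $(i,j)$ of edges with $j$ the successor of $i$ at $\mu$, and $\mathcal Z_\Delta=\bigsqcup_{\mu}\mathcal Z_\mu$ (disjoint union). A successor weighting is a function $W:\mathcal Z_\Delta\to G$. Put $\omega_\mu=\prod_{(i,j)\in\mathcal Z_\mu}W(i,j)$, let $\operatorname{ord}(\mu)$ be the order of $\omega_\mu$ in $G$, and $H_\mu=\langle\omega_\mu\rangle$. $W$ is a Brauer weighting if $\operatorname{ord}(\mu)$ divides $m(\mu)$ for all vertices $\mu$. For each $\mu$, $\sim$ is the equivalence relation on the set of pairs $(i,H_\mu g)$ ($i$ incident with $\mu$, $g\in G$) generated by $(i,H_\mu g)\sim(j,H_\mu gW(i,j))$ whenever $j$ is the successor of $i$ at $\mu$; the class of $(i,H_\mu g)$ is $[i,H_\mu g]$, and $\mathcal D_\mu$ is the set of classes. Brauer covering graph. The graph $\Delta_W$ has vertices $\mu_d$ ($\mu$ a vertex of $\Delta$, $d\in\mathcal D_\mu$) and edges $i_g$ ($i$ an edge of $\Delta$, $g\in G$). If $i$ has endpoints $\mu$ and $\nu$, then $i_g$ has endpoints $\mu_{[i,H_\mu g]}$ and $\nu_{[i,H_\nu g]}$; if $i$ is a loop at $\mu$ with its two occurrences $i,\hat i$, then $i_g$ has endpoints $\mu_{[i,H_\mu g]}$ and $\mu_{[\hat i,H_\mu g]}$. The cyclic ordering $\mathfrak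 o_W$ is defined by: if $j$ is the successor of $i$ at $\mu$, then $j_{gW(i,j)}$ is the successor of $i_g$ at $\mu_{[i,H_\mu g]}$. For a Brauer weighting, $m_W(\mu_d)=m(\mu)/\operatorname{ord}(\mu)$. Given a quantizing function $q$ on $\Delta$, $q_W(i_g,\mu_d)=q_{i,\mu}$, and $(\Delta_W,\mathfrak o_W,m_W,q_W)$ is the quantized Brauer covering graph. Towers. A sequence $(\Delta_0,\mathfrak o_0,m_0,q_0),\dots,(\Delta_n,\mathfrak o_n,m_n,q_n)$ of quantized Brauer graphs is a tower of quantized Brauer covering graphs if for each $1\le k\le n$ there are a finite abelian group $G_k$ and a Brauer weighting $W_k:\mathcal Z_{\Delta_{k-1}}\to G_k$ of $(\Delta_{k-1},\mathfrak o_{k-1},m_{k-1},q_{k-1})$ such that $(\Delta_k,\mathfrak o_k,m_k,q_k)$ is the quantized Brauer covering graph associated to $W_k$. *)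

theory Defs
  imports "HOL-Algebra.Algebra"
begin

text \<open>Quantized Brauer graphs, encoded by half-edges (edge occurrences).
  bg_half: the finite set of occurrences (each edge has two: one at each endpoint,
           a loop has its two occurrences at the same vertex);
  bg_vtx h: the vertex at which occurrence h sits;
  bg_mate h: the other occurrence of the same edge (the edge of h is the set of h and its mate);
  bg_succ h: the successor of h in the cyclic ordering at bg_vtx h;
  bg_mult: the multiplicity function;
  bg_q e mu: the quantizing value at (edge e, endpoint mu).\<close>

record ('v, 'h, 'k) qbg =
  bg_verts :: "'v set"
  bg_half  :: "'h set"
  bg_vtx   :: "'h \<Rightarrow> 'v"
  bg_mate  :: "'h \<Rightarrow> 'h"
  bg_succ  :: "'h \<Rightarrow> 'h"
  bg_mult  :: "'v \<Rightarrow> nat"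
  bg_q     :: "'h set \<Rightarrow> 'v \<Rightarrow> 'k"

definition bg_edge :: "('v, 'h, 'k) qbg \<Rightarrow> 'h \<Rightarrow> 'h set" where
  "bg_edge \<Gamma> h = {h, bg_mate \<Gamma> h}"

definition bg_edges :: "('v, 'h, 'k) qbg \<Rightarrow> 'h set set" where
  "bg_edges \<Gamma> = bg_edge \<Gamma> ` bg_half \<Gamma>"

definition bg_endpoints :: "('v, 'h, 'k) qbg \<Rightarrow> 'h \<Rightarrow> 'v set" where
  "bg_endpoints \<Gamma> h = {bg_vtx \<Gamma> h, bg_vtx \<Gamma> (bg_mate \<Gamma> h)}"

text \<open>occurrences at a vertex, valency (loops counted twice)\<close>
definition bg_at :: "('v, 'h, 'k) qbg \<Rightarrow> 'v \<Rightarrow> 'h set" where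
  "bg_at \<Gamma> \<mu> = {h \<in> bg_half \<Gamma>. bg_vtx \<Gamma> h = \<mu>}"

definition bg_val :: "('v, 'h, 'k) qbg \<Rightarrow> 'v \<Rightarrow> nat" where
  "bg_val \<Gamma> \<mu> = card (bg_at \<Gamma> \<mu>)"

definition brauer_graph :: "('v, 'h, 'k) qbg \<Rightarrow> bool" where
  "brauer_graph \<Gamma> \<longleftrightarrow>
     finite (bg_verts \<Gamma>) \<and> finite (bg_half \<Gamma>) \<and> bg_half \<Gamma> \<noteq> {} \<and>
     bg_vtx \<Gamma> ` bg_half \<Gamma> \<subseteq> bg_verts \<Gamma> \<and>
     (\<forall>h \<in> bg_half \<Gamma>. bg_mate \<Gamma> h \<in> bg_half \<Gamma> \<and> bg_mate \<Gamma> h \<noteq> h \<and>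
                      bg_mate \<Gamma> (bg_mate \<Gamma> h) = h) \<and>
     bij_betw (bg_succ \<Gamma>) (bg_half \<Gamma>) (bg_half \<Gamma>) \<and>
     (\<forall>h \<in> bg_half \<Gamma>. {(bg_succ \<Gamma> ^^ n) h | n. True} = bg_at \<Gamma> (bg_vtx \<Gamma> h)) \<and>
     (\<forall>\<mu> \<in> bg_verts \<Gamma>. bg_mult \<Gamma> \<mu> \<ge> 1) \<and>
     (\<forall>\<mu> \<in> bg_verts \<Gamma>. \<forall>\<nu> \<in> bg_verts \<Gamma>.
        (\<mu>, \<nu>) \<in> {(bg_vtx \<Gamma> h, bg_vtx \<Gamma> (bg_mate \<Gamma> h)) | h. h \<in> bg_half \<Gamma>}\<^sup>*)"

text \<open>an edge is truncated at an endpoint of valency 1 and multiplicity 1\<close>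
definition bg_trunc_vertex :: "('v, 'h, 'k) qbg \<Rightarrow> 'v \<Rightarrow> bool" where
  "bg_trunc_vertex \<Gamma> \<mu> \<longleftrightarrow> bg_val \<Gamma> \<mu> = 1 \<and> bg_mult \<Gamma> \<mu> = 1"

definition bg_X :: "('v, 'h, 'k) qbg \<Rightarrow> ('h set \<times> 'v) set" where
  "bg_X \<Gamma> = {(bg_edge \<Gamma> h, bg_vtx \<Gamma> h) | h. h \<in> bg_half \<Gamma> \<and>
                 \<not> bg_trunc_vertex \<Gamma> (bg_vtx \<Gamma> h) \<and>
                 \<not> bg_trunc_vertex \<Gamma> (bg_vtx \<Gamma> (bg_mate \<Gamma> h))}"

definition quantized_brauer_graph :: "('v, 'h, 'k::field) qbg \<Rightarrow> bool" where
  "quantized_brauer_graph \<Gamma> \<longleftrightarrow> brauer_graph \<Gamma> \<and>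
     (\<forall>(e, \<mu>) \<in> bg_X \<Gamma>. bg_q \<Gamma> e \<mu> \<noteq> 0)"

definition has_loop :: "('v, 'h, 'k) qbg \<Rightarrow> bool" where
  "has_loop \<Gamma> \<longleftrightarrow> (\<exists>h \<in> bg_half \<Gamma>. bg_vtx \<Gamma> (bg_mate \<Gamma> h) = bg_vtx \<Gamma> h)"

definition has_multiple_edges :: "('v, 'h, 'k) qbg \<Rightarrow> bool" where
  "has_multiple_edges \<Gamma> \<longleftrightarrow> (\<exists>h \<in> bg_half \<Gamma>. \<exists>h' \<in> bg_half \<Gamma>.
      bg_edge \<Gamma> h \<noteq> bg_edge \<Gamma> h' \<and> bg_endpoints \<Gamma> h = bg_endpoints \<Gamma> h')"

text \<open>A successor weighting is a function on occurrences h: W h is the weight of the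
  successor pair (h, succ h) at the vertex of h.\<close>

definition sw_omega :: "('v, 'h, 'k) qbg \<Rightarrow> 'g monoid \<Rightarrow> ('h \<Rightarrow> 'g) \<Rightarrow> 'v \<Rightarrow> 'g" where
  "sw_omega \<Gamma> G W \<mu> = finprod G W (bg_at \<Gamma> \<mu>)"

definition sw_ord :: "('v, 'h, 'k) qbg \<Rightarrow> 'g monoid \<Rightarrow> ('h \<Rightarrow> 'g) \<Rightarrow> 'v \<Rightarrow> nat" where
  "sw_ord \<Gamma> G W \<mu> = group.ord G (sw_omega \<Gamma> G W \<mu>)"

definition sw_H :: "('v, 'h, 'k) qbg \<Rightarrow> 'g monoid \<Rightarrow> ('h \<Rightarrow> 'g) \<Rightarrow> 'v \<Rightarrow> 'g set" where
  "sw_H \<Gamma> G W \<mu> = generate G {sw_omega \<Gamma> G W \<mu>}"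

definition successor_weighting :: "('v, 'h, 'k) qbg \<Rightarrow> 'g monoid \<Rightarrow> ('h \<Rightarrow> 'g) \<Rightarrow> bool" where
  "successor_weighting \<Gamma> G W \<longleftrightarrow> (\<forall>h \<in> bg_half \<Gamma>. W h \<in> carrier G)"

definition brauer_weighting :: "('v, 'h, 'k) qbg \<Rightarrow> 'g monoid \<Rightarrow> ('h \<Rightarrow> 'g) \<Rightarrow> bool" where
  "brauer_weighting \<Gamma> G W \<longleftrightarrow> successor_weighting \<Gamma> G W \<and>
     (\<forall>\<mu> \<in> bg_verts \<Gamma>. sw_ord \<Gamma> G W \<mu> dvd bg_mult \<Gamma> \<mu>)"

text \<open>generating step of the relation on pairs (h, H_mu g) with h at mu\<close>
definition sw_step :: "('v, 'h, 'k) qbg \<Rightarrow> 'g monoid \<Rightarrow> ('h \<Rightarrow> 'g) \<Rightarrow> 'v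
                       \<Rightarrow> (('h \<times> 'g set) \<times> ('h \<times> 'g set)) set" where
  "sw_step \<Gamma> G W \<mu> = {((h, C), (bg_succ \<Gamma> h, C #>\<^bsub>G\<^esub> W h)) | h C.
       h \<in> bg_at \<Gamma> \<mu> \<and> C \<in> rcosets\<^bsub>G\<^esub> (sw_H \<Gamma> G W \<mu>)}"

definition sw_class :: "('v, 'h, 'k) qbg \<Rightarrow> 'g monoid \<Rightarrow> ('h \<Rightarrow> 'g) \<Rightarrow> 'v
                        \<Rightarrow> 'h \<Rightarrow> 'g \<Rightarrow> ('h \<times> 'g set) set" where
  "sw_class \<Gamma> G W \<mu> h g =
     {y. ((h, sw_H \<Gamma> G W \<mu> #>\<^bsub>G\<^esub> g), y) \<in> (sw_step \<Gamma> G W \<mu> \<union> (sw_step \<Gamma> G W \<mu>)\<inverse>)\<^sup>*}"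

definition sw_D :: "('v, 'h, 'k) qbg \<Rightarrow> 'g monoid \<Rightarrow> ('h \<Rightarrow> 'g) \<Rightarrow> 'v \<Rightarrow> ('h \<times> 'g set) set set" where
  "sw_D \<Gamma> G W \<mu> = {sw_class \<Gamma> G W \<mu> h g | h g. h \<in> bg_at \<Gamma> \<mu> \<and> g \<in> carrier G}"

text \<open>the quantized Brauer covering graph: vertices mu_d = (mu, d), occurrences (h, g)
  (so the edge i_g consists of the occurrences (h, g), (mate h, g) of the edge i = {h, mate h})\<close>
definition bg_cover :: "('v, 'h, 'k) qbg \<Rightarrow> 'g monoid \<Rightarrow> ('h \<Rightarrow> 'g)
                        \<Rightarrow> ('v \<times> ('h \<times> 'g set) set, 'h \<times> 'g, 'k) qbg" where
  "bg_cover \<Gamma> G W =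
     \<lparr> bg_verts = {(\<mu>, d) | \<mu> d. \<mu> \<in> bg_verts \<Gamma> \<and> d \<in> sw_D \<Gamma> G W \<mu>},
       bg_half = bg_half \<Gamma> \<times> carrier G,
       bg_vtx = (\<lambda>(h, g). (bg_vtx \<Gamma> h, sw_class \<Gamma> G W (bg_vtx \<Gamma> h) h g)),
       bg_mate = (\<lambda>(h, g). (bg_mate \<Gamma> h, g)),
       bg_succ = (\<lambda>(h, g). (bg_succ \<Gamma> h, g \<otimes>\<^bsub>G\<^esub> W h)),
       bg_mult = (\<lambda>(\<mu>, d). bg_mult \<Gamma> \<mu> div sw_ord \<Gamma> G W \<mu>),
       bg_q = (\<lambda>e \<mu>'. bg_q \<Gamma> (fst ` e) (fst \<mu>')) \<rparr>"

definition tower_step :: "('v, 'h, 'k::field) qbg \<Rightarrow> 'g monoid \<Rightarrow> ('h \<Rightarrow> 'g) \<Rightarrow> bool" where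
  "tower_step \<Gamma> G W \<longleftrightarrow> comm_group G \<and> finite (carrier G) \<and>
     quantized_brauer_graph \<Gamma> \<and> brauer_weighting \<Gamma> G W \<and>
     quantized_brauer_graph (bg_cover \<Gamma> G W)"

end

theory Submission
  imports Defs
begin



locale bgraph =
  fixes \<Gamma> :: "('v, 'h, 'k) qbg"
  assumes bg: "brauer_graph \<Gamma>"
begin

abbreviation "HF \<equiv> bg_half \<Gamma>"
abbreviation "VS \<equiv> bg_verts \<Gamma>"
abbreviation "vt \<equiv> bg_vtx \<Gamma>"
abbreviation "mt \<equiv> bg_mate \<Gamma>"
abbreviation "sc \<equiv> bg_succ \<Gamma>"
abbreviation "AT \<equiv> bg_at \<Gamma>"
definition "EE = {(vt h, vt (mt h)) | h. h \<in> HF}"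

lemma fin_half: "finite HF" and fin_verts: "finite VS" and half_ne: "HF \<noteq> {}"
  using bg unfolding brauer_graph_def by auto

lemma vtx_in: "h \<in> HF \<Longrightarrow> vt h \<in> VS"
  using bg unfolding brauer_graph_def by auto

lemma mate_in: "h \<in> HF \<Longrightarrow> mt h \<in> HF"
  and mate_neq: "h \<in> HF \<Longrightarrow> mt h \<noteq> h"
  and mate_mate: "h \<in> HF \<Longrightarrow> mt (mt h) = h"
  using bg unfolding brauer_graph_def by auto

lemma succ_bij: "bij_betw sc HF HF"
  using bg unfolding brauer_graph_def by auto

lemma succ_in: "h \<in> HF \<Longrightarrow> sc h \<in> HF"
  using succ_bij bij_betwE by blast

lemma inj_succ: "inj_on sc HF"
  using succ_bij bij_betw_def by blast

lemma orbit: "h \<in> HF \<Longrightarrow> {(sc ^^ n) h | n. True} = AT (vt h)"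
  using bg unfolding brauer_graph_def by auto

lemma mult_ge1: "\<mu> \<in> VS \<Longrightarrow> bg_mult \<Gamma> \<mu> \<ge> 1"
  using bg unfolding brauer_graph_def by auto

lemma conn: "\<mu> \<in> VS \<Longrightarrow> \<nu> \<in> VS \<Longrightarrow> (\<mu>, \<nu>) \<in> EE\<^sup>*"
  using bg unfolding brauer_graph_def EE_def by auto

lemma at_iff: "x \<in> AT \<mu> \<longleftrightarrow> x \<in> HF \<and> vt x = \<mu>"
  unfolding bg_at_def by auto

lemma succ_vtx: "h \<in> HF \<Longrightarrow> vt (sc h) = vt h"
proof -
  assume h: "h \<in> HF"
  have "sc h \<in> {(sc ^^ n) h | n. True}" by (rule CollectI, rule exI[of _ 1]) simp
  then have "sc h \<in> AT (vt h)" by (simp only: orbit[OF h])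
  then show ?thesis by (simp add: at_iff)
qed

lemma funpow_in: "h \<in> HF \<Longrightarrow> (sc ^^ n) h \<in> HF \<and> vt ((sc ^^ n) h) = vt h"
  by (induction n) (auto simp: succ_in succ_vtx)

lemma funpow_cancel: "h \<in> HF \<Longrightarrow> h' \<in> HF \<Longrightarrow> (sc ^^ k) h = (sc ^^ k) h' \<Longrightarrow> h = h'"
proof (induction k)
  case 0 then show ?case by simp
next
  case (Suc k)
  have "sc ((sc ^^ k) h) = sc ((sc ^^ k) h')" using Suc.prems by simp
  then have "(sc ^^ k) h = (sc ^^ k) h'"
    using inj_succ funpow_in Suc.prems by (meson inj_on_def)
  then show ?case using Suc by blast
qed

lemma at_ne: "\<mu> \<in> VS \<Longrightarrow> AT \<mu> \<noteq> {}"
proof -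
  assume mu: "\<mu> \<in> VS"
  obtain h where h: "h \<in> HF" using half_ne by blast
  have "(\<mu>, vt h) \<in> EE\<^sup>*" using conn mu vtx_in h by blast
  then show ?thesis
  proof (cases rule: converse_rtranclE)
    case base then show ?thesis using h by (auto simp: at_iff)
  next
    case (step z) then show ?thesis by (auto simp: EE_def at_iff)
  qed
qed

lemma funpow_period:
  assumes h: "h \<in> HF" and d: "(sc ^^ d) h = h"
  shows "(sc ^^ (q * d)) h = h"
  by (induction q) (simp_all add: funpow_add d)

lemma cycle:
  assumes h: "h \<in> HF"
  defines "p \<equiv> card (AT (vt h))"
  shows "p > 0" and "inj_on (\<lambda>k. (sc ^^ k) h) {..<p}"
    and "(\<lambda>k. (sc ^^ k) h) ` {..<p} = AT (vt h)" and "(sc ^^ p) h = h"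
proof -
  have finO: "finite (AT (vt h))" using fin_half unfolding bg_at_def by auto
  have hO: "h \<in> AT (vt h)" using h by (simp add: at_iff)
  show p0: "p > 0" unfolding p_def using finO hO card_gt_0_iff by blast
  have sub: "(\<lambda>k. (sc ^^ k) h) ` A \<subseteq> AT (vt h)" for A
    using funpow_in[OF h] by (auto simp: at_iff)
  show inj: "inj_on (\<lambda>k. (sc ^^ k) h) {..<p}"
  proof (rule ccontr)
    assume "\<not> ?thesis"
    then obtain a b where ab: "a < p" "b < p" "a \<noteq> b" "(sc ^^ a) h = (sc ^^ b) h"
      unfolding inj_on_def by blast
    obtain a' b' where ab': "a' < b'" "b' < p" "(sc ^^ a') h = (sc ^^ b') h"
      using ab by (metis linorder_neqE_nat)
    define d where "d = b' - a'"
    have d0: "d > 0" "d < p" using ab' d_def by auto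
    have bb: "b' = a' + d" using ab' d_def by simp
    have "(sc ^^ b') h = (sc ^^ a') ((sc ^^ d) h)"
      unfolding bb funpow_add by simp
    then have "(sc ^^ a') h = (sc ^^ a') ((sc ^^ d) h)" using ab' by simp
    then have dh: "(sc ^^ d) h = h" using funpow_cancel funpow_in h by metis
    have "AT (vt h) \<subseteq> (\<lambda>k. (sc ^^ k) h) ` {..<d}"
    proof
      fix x assume "x \<in> AT (vt h)"
      then obtain n where n: "x = (sc ^^ n) h" using orbit[OF h] by blast
      have e: "n mod d + n div d * d = n" by (rule mod_div_mult_eq)
      have "(sc ^^ n) h = (sc ^^ (n mod d + n div d * d)) h" by (simp only: e)
      also have "\<dots> = (sc ^^ (n mod d)) ((sc ^^ ((n div d) * d)) h)"
        by (simp only: funpow_add o_apply)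
      also have "\<dots> = (sc ^^ (n mod d)) h" using funpow_period[OF h dh] by simp
      finally show "x \<in> (\<lambda>k. (sc ^^ k) h) ` {..<d}" using n d0 by auto
    qed
    then have "p \<le> card ((\<lambda>k. (sc ^^ k) h) ` {..<d})"
      unfolding p_def by (simp add: card_mono)
    also have "\<dots> \<le> d" using card_image_le[of "{..<d}"] by simp
    finally show False using d0 by simp
  qed
  show img: "(\<lambda>k. (sc ^^ k) h) ` {..<p} = AT (vt h)"
    apply (rule card_subset_eq[OF finO sub])
    using card_image[OF inj] p_def by simp
  have "(sc ^^ p) h \<in> AT (vt h)" using sub by blast
  then obtain k where k: "k < p" "(sc ^^ p) h = (sc ^^ k) h" using img by force
  show "(sc ^^ p) h = h"
  proof (cases "k = 0")
    case True then show ?thesis using k by simp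
  next
    case False
    have "(sc ^^ (k + (p - k))) h = (sc ^^ k) ((sc ^^ (p - k)) h)"
      by (simp only: funpow_add o_apply)
    then have "(sc ^^ k) ((sc ^^ (p - k)) h) = (sc ^^ k) h"
      using k by simp
    then have e: "(sc ^^ (p - k)) h = (sc ^^ 0) h" using funpow_cancel funpow_in h by simp
    have "p - k = 0" using inj_onD[OF inj e] False k by simp
    then show ?thesis using k False by simp
  qed
qed

lemma succ_image_at: "sc ` AT \<mu> = AT \<mu>"
proof
  show "sc ` AT \<mu> \<subseteq> AT \<mu>" using succ_in succ_vtx by (auto simp: at_iff)
  show "AT \<mu> \<subseteq> sc ` AT \<mu>"
  proof
    fix x assume x: "x \<in> AT \<mu>"
    then have xh: "x \<in> HF" "vt x = \<mu>" by (auto simp: at_iff)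
    define p where "p = card (AT (vt x))"
    have "p > 0" "(sc ^^ p) x = x" using cycle[OF xh(1)] p_def by auto
    then obtain q where q: "p = Suc q" "(sc ^^ p) x = x" using gr0_implies_Suc by blast
    then have "sc ((sc ^^ (p - 1)) x) = x" by simp
    moreover have "(sc ^^ (p - 1)) x \<in> AT \<mu>" using funpow_in[OF xh(1)] xh by (simp add: at_iff)
    ultimately show "x \<in> sc ` AT \<mu>" by force
  qed
qed

end



context comm_group begin

lemma cg_k:
  assumes "k \<in> carrier G" "a \<in> carrier G" "w \<in> carrier G" "b \<in> carrier G"
  shows "(k \<otimes> a \<otimes> w) \<otimes> inv (k \<otimes> b) = w \<otimes> a \<otimes> inv b"
proof -
  have "(k \<otimes> a \<otimes> w) \<otimes> inv (k \<otimes> b) = (k \<otimes> a \<otimes> w) \<otimes> (inv k \<otimes> inv b)" using assms by (simp add: inv_mult)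
  also have "\<dots> = (k \<otimes> inv k) \<otimes> (w \<otimes> a \<otimes> inv b)" using assms by (simp only: m_ac inv_closed m_closed)
  also have "\<dots> = w \<otimes> a \<otimes> inv b" using assms by simp
  finally show ?thesis .
qed

lemma cg_y:
  assumes "y \<in> carrier G" "w \<in> carrier G" "s \<in> carrier G" "u \<in> carrier G"
  shows "(y \<otimes> w \<otimes> inv s) \<otimes> inv (y \<otimes> inv u) = w \<otimes> u \<otimes> inv s"
proof -
  have "(y \<otimes> w \<otimes> inv s) \<otimes> inv (y \<otimes> inv u) = (y \<otimes> w \<otimes> inv s) \<otimes> (inv y \<otimes> u)" using assms by (simp add: inv_mult)
  also have "\<dots> = (y \<otimes> inv y) \<otimes> (w \<otimes> u \<otimes> inv s)" using assms by (simp only: m_ac inv_closed m_closed)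
  also have "\<dots> = w \<otimes> u \<otimes> inv s" using assms by simp
  finally show ?thesis .
qed

lemma coset_eqI:
  assumes sH: "subgroup H G" and a: "a \<in> carrier G" and b: "b \<in> carrier G" and ab: "a \<otimes> inv b \<in> H"
  shows "H #> a = H #> b"
proof -
  have "a \<in> H #> b" using subgroup.rcos_module_rev[OF sH is_group b a ab] .
  then have "H #> b = H #> a" using repr_independence[OF _ b sH] by blast
  then show ?thesis by simp
qed

lemma coset_eqD:
  assumes sH: "subgroup H G" and a: "a \<in> carrier G" and b: "b \<in> carrier G" and ab: "H #> a = H #> b"
  shows "a \<otimes> inv b \<in> H"
proof -
  have "a \<in> H #> a" by (rule rcos_self[OF a sH])
  then have "a \<in> H #> b" using ab by simp
  then show ?thesis using subgroup.rcos_module_imp[OF sH is_group b] by blast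
qed

lemma coset_rcancel:
  assumes "M \<subseteq> carrier G" "M' \<subseteq> carrier G" "w \<in> carrier G" "M #> w = M' #> w"
  shows "M = M'"
proof -
  have "M = (M #> w) #> inv w" using coset_mult_assoc[of M w "inv w"] assms by simp
  also have "\<dots> = (M' #> w) #> inv w" using assms by simp
  also have "\<dots> = M'" using coset_mult_assoc[of M' w "inv w"] assms by simp
  finally show ?thesis .
qed

end

locale cov = bgraph \<Gamma> for \<Gamma> :: "('v, 'h, 'k) qbg" +
  fixes G :: "'g monoid" (structure) and W :: "'h \<Rightarrow> 'g" and c :: "'h \<Rightarrow> 'g"
  assumes grp: "comm_group G" and finG: "finite (carrier G)"
    and Wc: "\<And>h. h \<in> HF \<Longrightarrow> W h \<in> carrier G"
    and cc: "\<And>h. h \<in> HF \<Longrightarrow> c h \<in> carrier G"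
    and loc: "\<And>h. h \<in> HF \<Longrightarrow> W h \<otimes> c h \<otimes> inv (c (sc h)) \<in> sw_H \<Gamma> G W (vt h)"
begin

sublocale G: comm_group G by (rule grp)

abbreviation "HH \<mu> \<equiv> sw_H \<Gamma> G W \<mu>"
abbreviation "om \<mu> \<equiv> sw_omega \<Gamma> G W \<mu>"
abbreviation "CV \<equiv> bg_cover \<Gamma> G W"
definition "V h g = (vt h, sw_class \<Gamma> G W (vt h) h g)"
definition "PP n h = finprod G (\<lambda>j. W ((sc ^^ j) h)) {..<n}"

lemma omega_in: "om \<mu> \<in> carrier G"
  unfolding sw_omega_def by (rule G.finprod_closed) (auto simp: Pi_def at_iff Wc)

lemma HH_sub: "subgroup (HH \<mu>) G"
  unfolding sw_H_def using omega_in by (intro G.generate_is_subgroup) auto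

lemma HH_car: "HH \<mu> \<subseteq> carrier G"
  using HH_sub by (rule subgroup.subset)

lemma HH_pow: "HH \<mu> = {om \<mu> [^] k | k. k \<in> (UNIV::nat set)}"
  unfolding sw_H_def by (rule G.generate_pow_on_finite_carrier[OF finG omega_in])

lemma step_coset:
  assumes x: "x \<in> HF" and k: "k \<in> carrier G"
  shows "(HH (vt x) #> (k \<otimes> c x)) #> W x = HH (vt x) #> (k \<otimes> c (sc x))"
proof -
  have "(HH (vt x) #> (k \<otimes> c x)) #> W x = HH (vt x) #> (k \<otimes> c x \<otimes> W x)"
    using x k by (simp add: G.coset_mult_assoc HH_car cc Wc)
  also have "\<dots> = HH (vt x) #> (k \<otimes> c (sc x))"
  proof (rule G.coset_eqI[OF HH_sub])
    show "k \<otimes> c x \<otimes> W x \<in> carrier G" using x k by (simp add: cc Wc)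
    show "k \<otimes> c (sc x) \<in> carrier G" using x k succ_in by (simp add: cc)
    have "(k \<otimes> c x \<otimes> W x) \<otimes> inv (k \<otimes> c (sc x)) = W x \<otimes> c x \<otimes> inv (c (sc x))"
      using x k succ_in by (intro G.cg_k) (auto simp: cc Wc)
    then show "(k \<otimes> c x \<otimes> W x) \<otimes> inv (k \<otimes> c (sc x)) \<in> HH (vt x)" using loc[OF x] by simp
  qed
  finally show ?thesis .
qed

lemma cls_char:
  assumes h: "h \<in> HF" and g: "g \<in> carrier G"
  shows "sw_class \<Gamma> G W (vt h) h g = {(x, HH (vt h) #> (g \<otimes> inv (c h) \<otimes> c x)) | x. x \<in> AT (vt h)}"
proof -
  define \<mu> where "\<mu> = vt h"
  define k where "k = g \<otimes> inv (c h)"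
  have k: "k \<in> carrier G" using g h cc k_def by simp
  have kh: "k \<otimes> c h = g" using g h cc unfolding k_def by (simp add: G.m_assoc)
  define R where "R = sw_step \<Gamma> G W \<mu> \<union> (sw_step \<Gamma> G W \<mu>)\<inverse>"
  define S where "S = {(x, HH \<mu> #> (k \<otimes> c x)) | x. x \<in> AT \<mu>}"
  have start: "(h, HH \<mu> #> g) \<in> S" using h kh unfolding S_def \<mu>_def
    by (auto simp: at_iff intro!: exI[of _ h])
  have sub: "y \<in> S" if "((h, HH \<mu> #> g), y) \<in> R\<^sup>*" for y
    using that
  proof (induction rule: rtrancl_induct)
    case base then show ?case using start .
  next
    case (step y z)
    from step.IH obtain x where x: "x \<in> AT \<mu>" "y = (x, HH \<mu> #> (k \<otimes> c x))" unfolding S_def by blast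
    have xH: "x \<in> HF" "vt x = \<mu>" using x by (auto simp: at_iff)
    from step.hyps(2) consider "(y, z) \<in> sw_step \<Gamma> G W \<mu>" | "(z, y) \<in> sw_step \<Gamma> G W \<mu>"
      unfolding R_def by blast
    then show ?case
    proof cases
      case 1
      then obtain x' C where e: "y = (x', C)" "z = (sc x', C #> W x')" "x' \<in> AT \<mu>"
        unfolding sw_step_def by blast
      have "x' = x" "C = HH \<mu> #> (k \<otimes> c x)" using e x by auto
      then have "z = (sc x, HH \<mu> #> (k \<otimes> c (sc x)))" using e step_coset[OF xH(1) k] xH by simp
      moreover have "sc x \<in> AT \<mu>" using xH succ_in succ_vtx by (simp add: at_iff)
      ultimately show ?thesis unfolding S_def by blast
    next
      case 2
      then obtain x' D where e: "z = (x', D)" "y = (sc x', D #> W x')" "x' \<in> AT \<mu>" "D \<in> rcosets (HH \<mu>)"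
        unfolding sw_step_def by blast
      have x'H: "x' \<in> HF" "vt x' = \<mu>" using e by (auto simp: at_iff)
      have "D #> W x' = HH \<mu> #> (k \<otimes> c (sc x'))" using e x by auto
      then have DW: "D #> W x' = (HH \<mu> #> (k \<otimes> c x')) #> W x'"
        using step_coset[OF x'H(1) k] x'H by simp
      have "D = HH \<mu> #> (k \<otimes> c x')"
      proof (rule G.coset_rcancel[OF _ _ _ DW])
        show "D \<subseteq> carrier G" using e(4) subgroup.rcosets_carrier[OF HH_sub G.is_group] by blast
        show "HH \<mu> #> (k \<otimes> c x') \<subseteq> carrier G"
          by (rule G.r_coset_subset_G) (simp_all add: HH_car k cc x'H)
        show "W x' \<in> carrier G" using Wc x'H by simp
      qed
      then show ?thesis using e unfolding S_def by blast
    qed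
  qed
  have sup: "((h, HH \<mu> #> g), ((sc ^^ n) h, HH \<mu> #> (k \<otimes> c ((sc ^^ n) h)))) \<in> R\<^sup>*" for n
  proof (induction n)
    case 0 then show ?case using kh by simp
  next
    case (Suc n)
    define x where "x = (sc ^^ n) h"
    have xH: "x \<in> HF" "vt x = \<mu>" using funpow_in[OF h] x_def \<mu>_def by auto
    have kx: "k \<otimes> c x \<in> carrier G" using k cc xH by simp
    have "((x, HH \<mu> #> (k \<otimes> c x)), (sc x, (HH \<mu> #> (k \<otimes> c x)) #> W x)) \<in> sw_step \<Gamma> G W \<mu>"
      unfolding sw_step_def using xH G.rcosetsI[OF HH_car kx] by (auto simp: at_iff)
    then have "((x, HH \<mu> #> (k \<otimes> c x)), (sc x, HH \<mu> #> (k \<otimes> c (sc x)))) \<in> R"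
      using step_coset[OF xH(1) k] xH unfolding R_def by simp
    then show ?case using Suc unfolding x_def by (simp add: rtrancl_into_rtrancl)
  qed
  have "sw_class \<Gamma> G W \<mu> h g = S"
  proof
    show "sw_class \<Gamma> G W \<mu> h g \<subseteq> S" unfolding sw_class_def using sub unfolding R_def by blast
    show "S \<subseteq> sw_class \<Gamma> G W \<mu> h g"
    proof
      fix y assume "y \<in> S"
      then obtain x where x: "x \<in> AT \<mu>" "y = (x, HH \<mu> #> (k \<otimes> c x))" unfolding S_def by blast
      then obtain n where "x = (sc ^^ n) h" using orbit[OF h] \<mu>_def by blast
      then show "y \<in> sw_class \<Gamma> G W \<mu> h g" using sup[of n] x unfolding sw_class_def R_def by simp
    qed
  qed
  then show ?thesis unfolding S_def \<mu>_def k_def by simp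
qed

lemma cls_char2:
  assumes h: "h \<in> HF" and g: "g \<in> carrier G"
  shows "sw_class \<Gamma> G W (vt h) h g = {(x, (HH (vt h) #> (g \<otimes> inv (c h))) #> c x) | x. x \<in> AT (vt h)}"
proof -
  have "(HH (vt h) #> (g \<otimes> inv (c h))) #> c x = HH (vt h) #> (g \<otimes> inv (c h) \<otimes> c x)" if "x \<in> AT (vt h)" for x
    using that h g by (simp add: G.coset_mult_assoc HH_car cc at_iff)
  then show ?thesis unfolding cls_char[OF h g] by blast
qed

lemma V_eq:
  assumes h: "h \<in> HF" and h': "h' \<in> HF" and g: "g \<in> carrier G" and g': "g' \<in> carrier G"
  shows "V h g = V h' g' \<longleftrightarrow> vt h = vt h' \<and>
           HH (vt h) #> (g \<otimes> inv (c h)) = HH (vt h) #> (g' \<otimes> inv (c h'))"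
proof
  assume a: "vt h = vt h' \<and> HH (vt h) #> (g \<otimes> inv (c h)) = HH (vt h) #> (g' \<otimes> inv (c h'))"
  have v: "vt h = vt h'" using a by simp
  have cs: "HH (vt h') #> (g \<otimes> inv (c h)) = HH (vt h') #> (g' \<otimes> inv (c h'))" using a v by simp
  have e1: "V h g = (vt h, {(x, (HH (vt h) #> (g \<otimes> inv (c h))) #> c x) | x. x \<in> AT (vt h)})"
    by (simp add: V_def cls_char2[OF h g])
  have e2: "V h' g' = (vt h', {(x, (HH (vt h') #> (g' \<otimes> inv (c h'))) #> c x) | x. x \<in> AT (vt h')})"
    by (simp add: V_def cls_char2[OF h' g'])
  show "V h g = V h' g'" by (simp only: e1 e2 v cs)
next
  assume e: "V h g = V h' g'"
  then have v: "vt h = vt h'" unfolding V_def by simp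
  have "(h, (HH (vt h) #> (g \<otimes> inv (c h))) #> c h) \<in> sw_class \<Gamma> G W (vt h) h g"
    unfolding cls_char2[OF h g] using h by (auto simp: at_iff)
  also have "sw_class \<Gamma> G W (vt h) h g = sw_class \<Gamma> G W (vt h') h' g'"
    using e unfolding V_def prod.inject by (rule conjunct2)
  finally obtain x where "x \<in> AT (vt h)" "h = x"
     "(HH (vt h) #> (g \<otimes> inv (c h))) #> c h = (HH (vt h) #> (g' \<otimes> inv (c h'))) #> c x"
    unfolding cls_char2[OF h' g'] v by auto
  then have eq: "(HH (vt h) #> (g \<otimes> inv (c h))) #> c h = (HH (vt h) #> (g' \<otimes> inv (c h'))) #> c h" by simp
  have "HH (vt h) #> (g \<otimes> inv (c h)) = HH (vt h) #> (g' \<otimes> inv (c h'))"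
  proof (rule G.coset_rcancel[OF _ _ _ eq])
    show "HH (vt h) #> (g \<otimes> inv (c h)) \<subseteq> carrier G"
      by (rule G.r_coset_subset_G) (simp_all add: HH_car g h cc)
    show "HH (vt h) #> (g' \<otimes> inv (c h')) \<subseteq> carrier G"
      by (rule G.r_coset_subset_G) (simp_all add: HH_car g' h' cc)
    show "c h \<in> carrier G" using cc h by simp
  qed
  then show "vt h = vt h' \<and> HH (vt h) #> (g \<otimes> inv (c h)) = HH (vt h) #> (g' \<otimes> inv (c h'))"
    using v by simp
qed


lemma CV_half: "bg_half CV = HF \<times> carrier G" by (simp add: bg_cover_def)
lemma CV_vtx: "bg_vtx CV (h, g) = V h g" by (simp add: bg_cover_def V_def)
lemma CV_mate: "bg_mate CV (h, g) = (mt h, g)" by (simp add: bg_cover_def)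
lemma CV_succ: "bg_succ CV (h, g) = (sc h, g \<otimes> W h)" by (simp add: bg_cover_def)
lemma CV_mult: "bg_mult CV (\<mu>, d) = bg_mult \<Gamma> \<mu> div sw_ord \<Gamma> G W \<mu>" by (simp add: bg_cover_def)
lemma CV_q: "bg_q CV e \<mu>' = bg_q \<Gamma> (fst ` e) (fst \<mu>')" by (simp add: bg_cover_def)

lemma CV_verts: "bg_verts CV = (\<lambda>(h, g). V h g) ` (HF \<times> carrier G)"
proof
  show "bg_verts CV \<subseteq> (\<lambda>(h, g). V h g) ` (HF \<times> carrier G)"
  proof
    fix y assume "y \<in> bg_verts CV"
    then obtain \<mu> h g where y: "y = (\<mu>, sw_class \<Gamma> G W \<mu> h g)" "h \<in> AT \<mu>" "g \<in> carrier G"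
      by (auto simp: bg_cover_def sw_D_def)
    then have "y = V h g" "h \<in> HF" by (auto simp: V_def at_iff)
    then show "y \<in> (\<lambda>(h, g). V h g) ` (HF \<times> carrier G)" using y by force
  qed
  show "(\<lambda>(h, g). V h g) ` (HF \<times> carrier G) \<subseteq> bg_verts CV"
  proof
    fix y assume "y \<in> (\<lambda>(h, g). V h g) ` (HF \<times> carrier G)"
    then obtain h g where y: "y = V h g" "h \<in> HF" "g \<in> carrier G" by auto
    have "h \<in> AT (vt h)" using y by (simp add: at_iff)
    then show "y \<in> bg_verts CV" using y vtx_in[OF y(2)]
      by (auto simp: bg_cover_def sw_D_def V_def)
  qed
qed

lemma V_succ:
  assumes x: "x \<in> HF" and y: "y \<in> carrier G"
  shows "V (sc x) (y \<otimes> W x) = V x y"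
proof -
  have sx: "sc x \<in> HF" "vt (sc x) = vt x" using succ_in succ_vtx x by auto
  have "HH (vt x) #> (y \<otimes> W x \<otimes> inv (c (sc x))) = HH (vt x) #> (y \<otimes> inv (c x))"
  proof (rule G.coset_eqI[OF HH_sub])
    show "y \<otimes> W x \<otimes> inv (c (sc x)) \<in> carrier G" using x y sx by (simp add: Wc cc)
    show "y \<otimes> inv (c x) \<in> carrier G" using x y by (simp add: cc)
    have "(y \<otimes> W x \<otimes> inv (c (sc x))) \<otimes> inv (y \<otimes> inv (c x)) = W x \<otimes> c x \<otimes> inv (c (sc x))"
      using x y sx by (intro G.cg_y) (auto simp: Wc cc)
    then show "(y \<otimes> W x \<otimes> inv (c (sc x))) \<otimes> inv (y \<otimes> inv (c x)) \<in> HH (vt x)"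
      using loc[OF x] by simp
  qed
  then show ?thesis using V_eq[OF sx(1) x _ y] x y sx by (simp add: Wc)
qed

lemma CV_pow_inv:
  assumes "x \<in> HF \<times> carrier G"
  shows "(bg_succ CV ^^ n) x \<in> HF \<times> carrier G \<and> bg_vtx CV ((bg_succ CV ^^ n) x) = bg_vtx CV x"
proof (induction n)
  case 0 then show ?case using assms by simp
next
  case (Suc n)
  obtain a b where ab: "(bg_succ CV ^^ n) x = (a, b)" by fastforce
  then have abc: "a \<in> HF" "b \<in> carrier G" using Suc by auto
  have "(bg_succ CV ^^ Suc n) x = (sc a, b \<otimes> W a)" using ab by (simp add: CV_succ)
  moreover have "V (sc a) (b \<otimes> W a) = V a b" using V_succ abc by simp
  ultimately show ?case using Suc ab abc succ_in Wc by (simp add: CV_vtx)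
qed

lemma PP_in: "h \<in> HF \<Longrightarrow> PP n h \<in> carrier G"
  unfolding PP_def by (rule G.finprod_closed) (auto simp: Pi_def Wc funpow_in)

lemma CV_pow:
  assumes h: "h \<in> HF" and g: "g \<in> carrier G"
  shows "(bg_succ CV ^^ n) (h, g) = ((sc ^^ n) h, g \<otimes> PP n h)"
proof (induction n)
  case 0 then show ?case using g by (simp add: PP_def)
next
  case (Suc n)
  have w: "W ((sc ^^ n) h) \<in> carrier G" using Wc funpow_in h by auto
  have "PP (Suc n) h = W ((sc ^^ n) h) \<otimes> PP n h"
    unfolding PP_def lessThan_Suc using w
    by (subst G.finprod_insert) (auto simp: Pi_def Wc funpow_in h)
  then show ?case using Suc w PP_in[OF h] g by (simp add: CV_succ G.m_ac)
qed

lemma PP_period: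
  assumes h: "h \<in> HF"
  shows "PP (card (AT (vt h))) h = om (vt h)"
proof -
  let ?p = "card (AT (vt h))"
  have "om (vt h) = finprod G W ((\<lambda>k. (sc ^^ k) h) ` {..<?p})"
    unfolding sw_omega_def using cycle(3)[OF h] by simp
  also have "\<dots> = finprod G (\<lambda>k. W ((sc ^^ k) h)) {..<?p}"
    by (rule G.finprod_reindex) (auto simp: Pi_def Wc funpow_in h cycle(2)[OF h])
  finally show ?thesis unfolding PP_def by simp
qed

lemma CV_round:
  assumes h: "h \<in> HF" and z: "z \<in> carrier G"
  shows "(bg_succ CV ^^ (card (AT (vt h)) * k)) (h, z) = (h, z \<otimes> om (vt h) [^] k)"
proof (induction k)
  case 0 then show ?case using z by simp
next
  case (Suc k)
  let ?p = "card (AT (vt h))"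
  have "(bg_succ CV ^^ (?p * Suc k)) (h, z) = (bg_succ CV ^^ ?p) ((bg_succ CV ^^ (?p * k)) (h, z))"
    by (simp add: funpow_add)
  also have "\<dots> = (bg_succ CV ^^ ?p) (h, z \<otimes> om (vt h) [^] k)" using Suc by simp
  also have "\<dots> = (h, z \<otimes> om (vt h) [^] k \<otimes> om (vt h))"
    using CV_pow[OF h, of "z \<otimes> om (vt h) [^] k" ?p] PP_period[OF h] cycle(4)[OF h] z omega_in by simp
  also have "\<dots> = (h, z \<otimes> om (vt h) [^] Suc k)" using z omega_in by (simp add: G.m_assoc)
  finally show ?case .
qed

lemma CV_orbit:
  assumes h: "h \<in> HF" and g: "g \<in> carrier G"
  shows "{(bg_succ CV ^^ n) (h, g) | n. True} = bg_at CV (V h g)"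
proof
  show "{(bg_succ CV ^^ n) (h, g) | n. True} \<subseteq> bg_at CV (V h g)"
  proof
    fix x assume "x \<in> {(bg_succ CV ^^ n) (h, g) | n. True}"
    then obtain n where n: "x = (bg_succ CV ^^ n) (h, g)" by blast
    have "x \<in> HF \<times> carrier G" "bg_vtx CV x = V h g"
      using CV_pow_inv[of "(h,g)" n] h g n by (auto simp: CV_vtx)
    then show "x \<in> bg_at CV (V h g)" by (simp add: bg_at_def CV_half)
  qed
  show "bg_at CV (V h g) \<subseteq> {(bg_succ CV ^^ n) (h, g) | n. True}"
  proof
    fix x assume "x \<in> bg_at CV (V h g)"
    then obtain h' g' where x: "x = (h', g')" "h' \<in> HF" "g' \<in> carrier G" "V h' g' = V h g"
      by (auto simp: bg_at_def CV_half CV_vtx)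
    then have v: "vt h' = vt h" using V_eq h g by blast
    have "h' \<in> AT (vt h)" using x(2) v by (simp add: at_iff)
    then have "h' \<in> {(sc ^^ n) h | n. True}" using orbit[OF h] by simp
    then obtain n where n: "h' = (sc ^^ n) h" by blast
    define y where "y = g \<otimes> PP n h"
    have y: "y \<in> carrier G" using y_def g PP_in h by simp
    have pn: "(bg_succ CV ^^ n) (h, g) = (h', y)" using CV_pow[OF h g] n y_def by simp
    have "V h' y = V h g" using CV_pow_inv[of "(h, g)" n] h g pn by (simp add: CV_vtx)
    then have "V h' y = V h' g'" using x by simp
    then have "HH (vt h') #> (y \<otimes> inv (c h')) = HH (vt h') #> (g' \<otimes> inv (c h'))"
      using V_eq[OF x(2) x(2) y x(3)] by simp
    then have "(HH (vt h') #> y) #> inv (c h') = (HH (vt h') #> g') #> inv (c h')"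
      using y x cc by (simp add: G.coset_mult_assoc HH_car)
    then have "HH (vt h') #> y = HH (vt h') #> g'"
    proof (rule G.coset_rcancel[rotated 3])
      show "HH (vt h') #> y \<subseteq> carrier G" by (rule G.r_coset_subset_G) (simp_all add: HH_car y)
      show "HH (vt h') #> g' \<subseteq> carrier G" by (rule G.r_coset_subset_G) (simp_all add: HH_car x)
      show "inv (c h') \<in> carrier G" using cc x by simp
    qed
    then have "g' \<in> HH (vt h') #> y" using G.repr_independenceD[OF HH_sub x(3)] by simp
    then obtain \<eta> where eta: "\<eta> \<in> HH (vt h')" "g' = \<eta> \<otimes> y" unfolding r_coset_def by blast
    have "\<eta> \<in> {om (vt h') [^] k | k. k \<in> (UNIV::nat set)}" using eta HH_pow by blast
    then obtain k :: nat where k: "\<eta> = om (vt h') [^] k" by blast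
    have g'eq: "g' = y \<otimes> om (vt h') [^] k" using eta k y omega_in by (simp add: G.m_comm)
    have "(bg_succ CV ^^ (card (AT (vt h')) * k + n)) (h, g) = (bg_succ CV ^^ (card (AT (vt h')) * k)) (h', y)"
      using pn by (simp add: funpow_add)
    also have "\<dots> = (h', g')" using CV_round[OF x(2) y] g'eq by simp
    finally have "x = (bg_succ CV ^^ (card (AT (vt h')) * k + n)) (h, g)" using x(1) by simp
    then show "x \<in> {(bg_succ CV ^^ n) (h, g) | n. True}" by blast
  qed
qed

end



context cov begin

abbreviation "EEC \<equiv> {(bg_vtx CV y, bg_vtx CV (bg_mate CV y)) | y. y \<in> bg_half CV}"

lemma CV_succ_bij: "bij_betw (bg_succ CV) (bg_half CV) (bg_half CV)"
  unfolding bij_betw_def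
proof
  show "inj_on (bg_succ CV) (bg_half CV)"
  proof (rule inj_onI)
    fix x y assume x: "x \<in> bg_half CV" and y: "y \<in> bg_half CV" and e: "bg_succ CV x = bg_succ CV y"
    obtain a b where ab: "x = (a, b)" "a \<in> HF" "b \<in> carrier G" using x by (auto simp: CV_half)
    obtain a' b' where ab': "y = (a', b')" "a' \<in> HF" "b' \<in> carrier G" using y by (auto simp: CV_half)
    have "sc a = sc a'" "b \<otimes> W a = b' \<otimes> W a'" using e ab ab' by (auto simp: CV_succ)
    then have "a = a'" using inj_succ ab ab' by (meson inj_onD)
    then have "b = b'" using \<open>b \<otimes> W a = b' \<otimes> W a'\<close> ab ab' Wc by simp
    then show "x = y" using ab ab' \<open>a = a'\<close> by simp
  qed
  show "bg_succ CV ` bg_half CV = bg_half CV"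
  proof
    show "bg_succ CV ` bg_half CV \<subseteq> bg_half CV"
      using succ_in Wc by (auto simp: CV_half CV_succ)
    show "bg_half CV \<subseteq> bg_succ CV ` bg_half CV"
    proof
      fix y assume "y \<in> bg_half CV"
      then obtain k z where kz: "y = (k, z)" "k \<in> HF" "z \<in> carrier G" by (auto simp: CV_half)
      have "k \<in> sc ` HF" using succ_bij kz unfolding bij_betw_def by simp
      then obtain a where a: "a \<in> HF" "k = sc a" by blast
      have e: "y = bg_succ CV (a, z \<otimes> inv (W a))" using a kz Wc by (simp add: CV_succ G.m_assoc)
      have m: "(a, z \<otimes> inv (W a)) \<in> bg_half CV" using a kz Wc by (simp add: CV_half)
      show "y \<in> bg_succ CV ` bg_half CV" using e m by blast
    qed
  qed
qed

theorem CV_bg: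
  assumes bw: "\<And>\<mu>. \<mu> \<in> VS \<Longrightarrow> sw_ord \<Gamma> G W \<mu> dvd bg_mult \<Gamma> \<mu>"
    and cn: "\<And>x. x \<in> HF \<times> carrier G \<Longrightarrow> (b, bg_vtx CV x) \<in> EEC\<^sup>*"
  shows "brauer_graph CV"
  unfolding brauer_graph_def
proof (intro conjI)
  show "finite (bg_verts CV)" unfolding CV_verts using fin_half finG by simp
  show "finite (bg_half CV)" unfolding CV_half using fin_half finG by simp
  show "bg_half CV \<noteq> {}" unfolding CV_half using half_ne by auto
  show "bg_vtx CV ` bg_half CV \<subseteq> bg_verts CV" unfolding CV_verts CV_half by (auto simp: CV_vtx)
  show "\<forall>h\<in>bg_half CV. bg_mate CV h \<in> bg_half CV \<and> bg_mate CV h \<noteq> h \<and> bg_mate CV (bg_mate CV h) = h"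
    by (auto simp: CV_half CV_mate mate_in mate_neq mate_mate)
  show "bij_betw (bg_succ CV) (bg_half CV) (bg_half CV)" by (rule CV_succ_bij)
  show "\<forall>h\<in>bg_half CV. {(bg_succ CV ^^ n) h |n. True} = bg_at CV (bg_vtx CV h)"
    using CV_orbit by (auto simp: CV_half CV_vtx)
  show "\<forall>\<mu>\<in>bg_verts CV. 1 \<le> bg_mult CV \<mu>"
  proof
    fix \<mu>' assume "\<mu>' \<in> bg_verts CV"
    then obtain h g where hg: "\<mu>' = V h g" "h \<in> HF" "g \<in> carrier G" unfolding CV_verts by auto
    have mu: "vt h \<in> VS" using vtx_in hg by simp
    have m1: "bg_mult \<Gamma> (vt h) \<ge> 1" using mult_ge1 mu by simp
    have d: "sw_ord \<Gamma> G W (vt h) dvd bg_mult \<Gamma> (vt h)" using bw mu by simp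
    then have "sw_ord \<Gamma> G W (vt h) \<noteq> 0" using m1 by (metis dvd_0_left_iff not_one_le_zero)
    moreover have "sw_ord \<Gamma> G W (vt h) \<le> bg_mult \<Gamma> (vt h)" using d m1 by (simp add: dvd_imp_le)
    ultimately have "bg_mult \<Gamma> (vt h) div sw_ord \<Gamma> G W (vt h) > 0" by (simp add: div_greater_zero_iff)
    then show "1 \<le> bg_mult CV \<mu>'" using hg by (simp add: V_def CV_mult)
  qed
  have symE: "sym EEC"
  proof (rule symI)
    fix p q assume "(p, q) \<in> EEC"
    then obtain y where y: "y \<in> bg_half CV" "p = bg_vtx CV y" "q = bg_vtx CV (bg_mate CV y)" by blast
    have mem: "bg_mate CV y \<in> bg_half CV" and mm: "bg_mate CV (bg_mate CV y) = y"
      using y by (auto simp: CV_half CV_mate mate_in mate_mate)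
    have "(bg_vtx CV (bg_mate CV y), bg_vtx CV (bg_mate CV (bg_mate CV y))) \<in> EEC" using mem by blast
    then show "(q, p) \<in> EEC" unfolding mm y(2,3) .
  qed
  show "\<forall>\<mu>\<in>bg_verts CV. \<forall>\<nu>\<in>bg_verts CV. (\<mu>, \<nu>) \<in> EEC\<^sup>*"
  proof (intro ballI)
    fix \<mu>' \<nu>' assume m: "\<mu>' \<in> bg_verts CV" and n: "\<nu>' \<in> bg_verts CV"
    obtain x where x: "x \<in> HF \<times> carrier G" "\<mu>' = bg_vtx CV x" using m unfolding CV_verts by (auto simp: CV_vtx)
    obtain x' where x': "x' \<in> HF \<times> carrier G" "\<nu>' = bg_vtx CV x'" using n unfolding CV_verts by (auto simp: CV_vtx)
    have "(\<mu>', b) \<in> EEC\<^sup>*" using symD[OF sym_rtrancl[OF symE] cn[OF x(1)]] x by simp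
    moreover have "(b, \<nu>') \<in> EEC\<^sup>*" using cn[OF x'(1)] x' by simp
    ultimately show "(\<mu>', \<nu>') \<in> EEC\<^sup>*" by (rule rtrancl_trans)
  qed
qed

lemma CV_trunc:
  assumes x: "x \<in> HF" and g: "g \<in> carrier G" and tr: "bg_trunc_vertex \<Gamma> (vt x)"
    and bw: "sw_ord \<Gamma> G W (vt x) dvd bg_mult \<Gamma> (vt x)"
  shows "bg_trunc_vertex CV (V x g)"
proof -
  have c1: "card (AT (vt x)) = 1" and m1: "bg_mult \<Gamma> (vt x) = 1"
    using tr unfolding bg_trunc_vertex_def bg_val_def by auto
  have xa: "x \<in> AT (vt x)" using x by (simp add: at_iff)
  obtain a where "AT (vt x) = {a}" using c1 card_1_singletonE by blast
  then have A: "AT (vt x) = {x}" using xa by simp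
  have "sc x \<in> AT (vt x)" using x succ_in succ_vtx by (simp add: at_iff)
  then have scx: "sc x = x" using A by simp
  have om: "om (vt x) = W x" unfolding sw_omega_def A using Wc x by simp
  have "sw_ord \<Gamma> G W (vt x) = 1" using bw m1 by simp
  then have o1: "G.ord (W x) = 1" unfolding sw_ord_def om .
  then have W1: "W x = \<one>" using G.ord_eq_1 Wc x by blast
  have "bg_mult CV (V x g) = 1"
    using m1 \<open>sw_ord \<Gamma> G W (vt x) = 1\<close> by (simp add: V_def CV_mult)
  moreover have "(bg_succ CV ^^ n) (x, g) = (x, g)" for n
    by (induction n) (simp_all add: CV_succ scx W1 g)
  then have "{(bg_succ CV ^^ n) (x, g) | n. True} = {(x, g)}" by auto
  then have "bg_val CV (V x g) = 1" unfolding bg_val_def CV_orbit[OF x g, symmetric] by simp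
  ultimately show ?thesis unfolding bg_trunc_vertex_def by simp
qed

end

theorem CV_qbg:
  fixes \<Gamma> :: "('v, 'h, 'k::field) qbg" and G :: "'g monoid"
  assumes cv: "cov \<Gamma> G W c"
    and q: "quantized_brauer_graph \<Gamma>"
    and bw: "\<And>\<mu>. \<mu> \<in> bg_verts \<Gamma> \<Longrightarrow> sw_ord \<Gamma> G W \<mu> dvd bg_mult \<Gamma> \<mu>"
    and cn: "\<And>x. x \<in> bg_half \<Gamma> \<times> carrier G \<Longrightarrow> (b, bg_vtx (bg_cover \<Gamma> G W) x) \<in>
       {(bg_vtx (bg_cover \<Gamma> G W) y, bg_vtx (bg_cover \<Gamma> G W) (bg_mate (bg_cover \<Gamma> G W) y)) | y. y \<in> bg_half (bg_cover \<Gamma> G W)}\<^sup>*"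
  shows "quantized_brauer_graph (bg_cover \<Gamma> G W)"
proof -
  interpret cov \<Gamma> G W c by (rule cv)
  show ?thesis
  unfolding quantized_brauer_graph_def
  proof (intro conjI)
    show "brauer_graph CV" by (rule CV_bg[OF bw cn])
    show "\<forall>(e, \<mu>)\<in>bg_X CV. bg_q CV e \<mu> \<noteq> 0"
    proof (clarify)
      fix e \<mu>' assume "(e, \<mu>') \<in> bg_X CV" and q0: "bg_q CV e \<mu>' = 0"
      then obtain y where y: "y \<in> bg_half CV" "e = bg_edge CV y" "\<mu>' = bg_vtx CV y"
        "\<not> bg_trunc_vertex CV (bg_vtx CV y)" "\<not> bg_trunc_vertex CV (bg_vtx CV (bg_mate CV y))"
        unfolding bg_X_def by blast
      obtain h g where hg: "y = (h, g)" "h \<in> HF" "g \<in> carrier G" using y(1) by (auto simp: CV_half)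
      have t1: "\<not> bg_trunc_vertex \<Gamma> (vt h)"
        using CV_trunc[OF hg(2) hg(3) _ bw[OF vtx_in[OF hg(2)]]] y(4) hg by (auto simp: CV_vtx)
      have mh: "mt h \<in> HF" using mate_in hg by simp
      have t2: "\<not> bg_trunc_vertex \<Gamma> (vt (mt h))"
        using CV_trunc[OF mh hg(3) _ bw[OF vtx_in[OF mh]]] y(5) hg by (auto simp: CV_vtx CV_mate)
      have "(bg_edge \<Gamma> h, vt h) \<in> bg_X \<Gamma>" unfolding bg_X_def using hg t1 t2 by blast
      then have "bg_q \<Gamma> (bg_edge \<Gamma> h) (vt h) \<noteq> 0" using q unfolding quantized_brauer_graph_def by blast
      moreover have "fst ` e = bg_edge \<Gamma> h" using y hg by (auto simp: bg_edge_def CV_mate)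
      moreover have "fst \<mu>' = vt h" using y hg by (simp add: CV_vtx V_def)
      ultimately show False using q0 by (simp add: CV_q)
    qed
  qed
qed




inductive_set genset :: "nat \<Rightarrow> nat set \<Rightarrow> nat set" for L :: nat and Ms :: "nat set" where
  g0: "0 \<in> genset L Ms"
| gs: "x \<in> genset L Ms \<Longrightarrow> m \<in> Ms \<Longrightarrow> (x + L div m) mod L \<in> genset L Ms"

lemma genset_all:
  assumes fin: "finite Ms" and nz: "0 \<notin> Ms" and L: "L = Lcm Ms" and x: "x < L"
  shows "x \<in> genset L Ms"
proof -
  have L0: "L > 0" using Lcm_0_iff[OF fin] nz L by auto
  have lt: "y < L" if "y \<in> genset L Ms" for y
    using that by induction (simp_all add: L0)
  have addc: "(y + z) mod L \<in> genset L Ms" if y: "y \<in> genset L Ms" and z: "z \<in> genset L Ms" for y z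
    using z
  proof induction
    case g0 then show ?case using y lt[OF y] by simp
  next
    case (gs z m)
    have "(y + (z + L div m) mod L) mod L = ((y + z) mod L + L div m) mod L"
      by (simp add: mod_add_left_eq mod_add_right_eq add.assoc)
    then show ?case using genset.gs[OF gs.IH gs.hyps(2)] by simp
  qed
  have mulc: "(k * y) mod L \<in> genset L Ms" if y: "y \<in> genset L Ms" for k y
  proof (induction k)
    case 0 then show ?case using g0 by simp
  next
    case (Suc k)
    have "(Suc k * y) mod L = ((k * y) mod L + y) mod L" by (simp add: mod_add_left_eq mod_add_right_eq add.commute)
    then show ?case using addc[OF Suc y] by simp
  qed
  define s where "s = (LEAST s. 0 < s \<and> (s \<in> genset L Ms \<or> s = L))"
  have sP: "0 < s \<and> (s \<in> genset L Ms \<or> s = L)" unfolding s_def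
    by (rule LeastI[of _ L]) (simp add: L0)
  have smin: "\<not> (0 < t \<and> t \<in> genset L Ms)" if "t < s" for t
    using not_less_Least[OF that[unfolded s_def]] by blast
  have sL: "s \<le> L" unfolding s_def by (rule Least_le) (simp add: L0)
  have sdvd: "s dvd y" if y: "y \<in> genset L Ms" for y
  proof (cases "s = L")
    case True
    then have "y = 0" using lt[OF y] smin[of y] y by auto
    then show ?thesis by simp
  next
    case False
    then have sg: "s \<in> genset L Ms" using sP by simp
    define q where "q = y div s"
    define r where "r = y mod s"
    obtain L' where L': "L = Suc L'" using L0 gr0_implies_Suc by blast
    have yq: "y = q * s + r" unfolding q_def r_def by simp
    have "y + q * (L - 1) * s = r + q * s * L" unfolding yq L' by (simp add: algebra_simps)
    then have "(y + (q * (L - 1) * s) mod L) mod L = r mod L" by (simp add: mod_add_right_eq)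
    moreover have "r < s" unfolding r_def using sP by simp
    ultimately have "(y + (q * (L - 1) * s) mod L) mod L = r" using sL by simp
    moreover have "(y + (q * (L - 1) * s) mod L) mod L \<in> genset L Ms"
      using addc[OF y mulc[OF sg, of "q * (L - 1)"]] by (simp add: mult.assoc)
    ultimately have "r \<in> genset L Ms" by simp
    then have "r = 0" using smin[OF \<open>r < s\<close>] by auto
    then show ?thesis unfolding r_def by (simp add: mod_eq_0_iff_dvd)
  qed
  have sdL: "s dvd L"
  proof (cases "s = L")
    case True then show ?thesis by simp
  next
    case False
    then have sg: "s \<in> genset L Ms" using sP by simp
    define r where "r = L mod s"
    show ?thesis
    proof (rule ccontr)
      assume "\<not> s dvd L"
      then have r0: "r > 0" unfolding r_def using mod_eq_0_iff_dvd[of L s] by simp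
      have rs: "r < s" unfolding r_def using sP by simp
      have "(L div s + 1) * s = L - r + s" unfolding r_def
        by (metis add_diff_cancel_right' div_mult_mod_eq mult_Suc Suc_eq_plus1 add.commute)
      also have "\<dots> = L + (s - r)" using rs sL r0 by simp
      finally have "((L div s + 1) * s) mod L = (s - r) mod L" by simp
      also have "\<dots> = s - r" using sL r0 rs by (intro mod_less) linarith
      finally have "s - r \<in> genset L Ms" using mulc[OF sg, of "L div s + 1"] by simp
      moreover have "s - r < s" "0 < s - r" using r0 rs by auto
      ultimately show False using smin by blast
    qed
  qed
  have "m dvd L div s" if m: "m \<in> Ms" for m
  proof (cases "m = 1")
    case True then show ?thesis by simp
  next
    case False
    have m0: "m > 0" using nz m by (cases m) auto
    then have m2: "m > 1" using False by simp
    have mL: "m dvd L" using dvd_Lcm[OF m] L by simp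
    have "(0 + L div m) mod L \<in> genset L Ms" by (rule gs[OF g0 m])
    moreover have "L div m < L" using m2 L0 by simp
    ultimately have "L div m \<in> genset L Ms" by simp
    then obtain t where t: "L div m = s * t" using sdvd by (meson dvdE)
    have "L = m * (L div m)" using mL by simp
    then have "L = s * (m * t)" using t by simp
    then have "L div s = m * t" using sP by simp
    then show ?thesis by simp
  qed
  then have "Lcm Ms dvd L div s" by (rule Lcm_least)
  then have "L dvd L div s" using L by simp
  moreover have "L div s > 0" using sdL sL sP by (simp add: div_greater_zero_iff)
  ultimately have "L \<le> L div s" by (simp add: dvd_imp_le)
  have s1: "s = 1"
  proof (rule ccontr)
    assume "s \<noteq> 1"
    then have "1 < s" using sP by simp
    then have "L div s < L" using L0 by (rule div_less_dividend)
    then show False using \<open>L \<le> L div s\<close> by simp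
  qed
  show ?thesis
  proof (cases "L = 1")
    case True then show ?thesis using x g0 by simp
  next
    case False
    then have "1 \<in> genset L Ms" using sP s1 by auto
    then have "(x * 1) mod L \<in> genset L Ms" by (rule mulc)
    then show ?thesis using x by simp
  qed
qed

definition Zm :: "nat \<Rightarrow> nat monoid" where
  "Zm N = \<lparr>carrier = {..<N}, monoid.mult = (\<lambda>x y. (x + y) mod N), one = 0\<rparr>"

lemma Zm_simps: "carrier (Zm N) = {..<N}" "x \<otimes>\<^bsub>Zm N\<^esub> y = (x + y) mod N" "\<one>\<^bsub>Zm N\<^esub> = 0"
  by (simp_all add: Zm_def)

lemma Zm_cg: assumes N: "N > 0" shows "comm_group (Zm N)"
proof (rule comm_groupI)
  fix x y z assume x: "x \<in> carrier (Zm N)" and y: "y \<in> carrier (Zm N)" and z: "z \<in> carrier (Zm N)"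
  show "x \<otimes>\<^bsub>Zm N\<^esub> y \<in> carrier (Zm N)" using N by (simp add: Zm_simps)
  show "x \<otimes>\<^bsub>Zm N\<^esub> y \<otimes>\<^bsub>Zm N\<^esub> z = x \<otimes>\<^bsub>Zm N\<^esub> (y \<otimes>\<^bsub>Zm N\<^esub> z)"
    by (simp add: Zm_simps mod_add_left_eq mod_add_right_eq add.assoc)
  show "x \<otimes>\<^bsub>Zm N\<^esub> y = y \<otimes>\<^bsub>Zm N\<^esub> x" by (simp add: Zm_simps add.commute)
next
  show "\<one>\<^bsub>Zm N\<^esub> \<in> carrier (Zm N)" using N by (simp add: Zm_simps)
next
  fix x assume x: "x \<in> carrier (Zm N)"
  show "\<one>\<^bsub>Zm N\<^esub> \<otimes>\<^bsub>Zm N\<^esub> x = x" using x by (simp add: Zm_simps)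
  have "((N - x) mod N + x) mod N = 0" using x by (simp add: Zm_simps mod_add_left_eq)
  then show "\<exists>y\<in>carrier (Zm N). y \<otimes>\<^bsub>Zm N\<^esub> x = \<one>\<^bsub>Zm N\<^esub>"
    using N by (auto simp: Zm_simps intro!: bexI[of _ "(N - x) mod N"])
qed

lemma Zm_pow:
  assumes N: "N > 0"
  shows "x [^]\<^bsub>Zm N\<^esub> (k::nat) = (k * x) mod N"
proof -
  interpret comm_group "Zm N" by (rule Zm_cg[OF N])
  show ?thesis
    by (induction k) (simp_all add: Zm_simps mod_add_left_eq mod_add_right_eq add.commute)
qed

lemma Zm_ord:
  assumes N: "N > 0" and x: "x < N"
  shows "group.ord (Zm N) x dvd k \<longleftrightarrow> (k * x) mod N = 0"
proof -
  interpret comm_group "Zm N" by (rule Zm_cg[OF N])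
  show ?thesis using pow_eq_id[of x k] x by (simp add: Zm_pow[OF N] Zm_simps)
qed




lemma arithA:
  fixes m L k :: nat
  assumes m: "m dvd L" and L0: "L > 0"
  shows "(k * ((L div m) mod L)) mod L = 0 \<longleftrightarrow> m dvd k"
proof -
  obtain d where d: "L = m * d" using m by (meson dvdE)
  have d0: "d \<noteq> 0" using d L0 by auto
  have m0: "m \<noteq> 0" using d L0 by auto
  have Ld: "L div m = d" using d m0 by simp
  have "(k * ((L div m) mod L)) mod L = (k * d) mod L" using Ld by (simp add: mod_mult_right_eq)
  also have "(k * d) mod L = 0 \<longleftrightarrow> m * d dvd k * d" using d by (simp add: mod_eq_0_iff_dvd)
  also have "\<dots> \<longleftrightarrow> m dvd k" using d0 by simp
  finally show ?thesis .
qed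

lemma constrA:
  fixes \<Gamma> :: "('v, 'h, 'k::field) qbg"
  assumes q: "quantized_brauer_graph \<Gamma>"
  shows "\<exists>(G::nat monoid) W. tower_step \<Gamma> G W \<and>
           (\<forall>\<mu> \<in> bg_verts (bg_cover \<Gamma> G W). bg_mult (bg_cover \<Gamma> G W) \<mu> = 1)"
proof -
  have bg: "brauer_graph \<Gamma>" using q unfolding quantized_brauer_graph_def by simp
  interpret bgraph \<Gamma> using bg by (simp add: bgraph_def)
  define Ms where "Ms = bg_mult \<Gamma> ` VS"
  define L where "L = Lcm Ms"
  have finMs: "finite Ms" using fin_verts Ms_def by simp
  have nz: "0 \<notin> Ms" using mult_ge1 Ms_def by force
  have L0: "L > 0" using Lcm_0_iff[OF finMs] nz L_def by auto
  have mdvd: "bg_mult \<Gamma> \<mu> dvd L" if "\<mu> \<in> VS" for \<mu> using dvd_Lcm that Ms_def L_def by auto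
  define a where "a \<mu> = (L div bg_mult \<Gamma> \<mu>) mod L" for \<mu>
  define hs where "hs \<mu> = (SOME h. h \<in> AT \<mu>)" for \<mu>
  have hs: "hs \<mu> \<in> AT \<mu>" if mu: "\<mu> \<in> VS" for \<mu>
  proof -
    obtain h where "h \<in> AT \<mu>" using at_ne[OF mu] by blast
    then show ?thesis unfolding hs_def by (rule someI)
  qed
  define W where "W h = (if h = hs (vt h) then a (vt h) else 0)" for h
  define G where "G = Zm L"
  have cg: "comm_group G" using Zm_cg[OF L0] G_def by simp
  interpret G: comm_group G by (rule cg)
  have carG: "carrier G = {..<L}" "\<one>\<^bsub>G\<^esub> = 0" "\<And>x y. x \<otimes>\<^bsub>G\<^esub> y = (x + y) mod L"
    by (simp_all add: G_def Zm_simps)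
  have finG: "finite (carrier G)" using carG by simp
  have ac: "a \<mu> \<in> carrier G" for \<mu> using L0 carG by (simp add: a_def)
  have Wc: "W h \<in> carrier G" for h using ac L0 carG by (simp add: W_def)
  have om: "sw_omega \<Gamma> G W \<mu> = a \<mu>" if \<mu>: "\<mu> \<in> VS" for \<mu>
  proof -
    have "sw_omega \<Gamma> G W \<mu> = finprod G (\<lambda>j. if hs \<mu> = j then a \<mu> else \<one>\<^bsub>G\<^esub>) (AT \<mu>)"
      unfolding sw_omega_def
      using L0 by (intro G.finprod_cong') (auto simp: W_def at_iff carG a_def Pi_def)
    also have "\<dots> = a \<mu>"
      using G.finprod_singleton[of "hs \<mu>" "AT \<mu>" "\<lambda>_. a \<mu>"] hs[OF \<mu>] ac fin_half
      by (simp add: Pi_def bg_at_def)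
    finally show ?thesis .
  qed
  have orda: "G.ord (a \<mu>) = bg_mult \<Gamma> \<mu>" if \<mu>: "\<mu> \<in> VS" for \<mu>
  proof -
    have key: "G.ord (a \<mu>) dvd k \<longleftrightarrow> bg_mult \<Gamma> \<mu> dvd k" for k
      using Zm_ord[OF L0, of "a \<mu>" k] arithA[OF mdvd[OF \<mu>] L0, of k] ac carG
      unfolding G_def a_def by simp
    show ?thesis using key[of "G.ord (a \<mu>)"] key[of "bg_mult \<Gamma> \<mu>"] by (simp add: dvd_antisym)
  qed
  have sword: "sw_ord \<Gamma> G W \<mu> = bg_mult \<Gamma> \<mu>" if "\<mu> \<in> VS" for \<mu>
    unfolding sw_ord_def using om orda that by simp
  have cv: "cov \<Gamma> G W (\<lambda>_. \<one>\<^bsub>G\<^esub>)"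
  proof (rule cov.intro)
    show "bgraph \<Gamma>" using bg by (simp add: bgraph_def)
  next
    show "cov_axioms \<Gamma> G W (\<lambda>_. \<one>\<^bsub>G\<^esub>)"
  proof (rule cov_axioms.intro)
    show "comm_group G" by (rule cg)
    show "finite (carrier G)" by (rule finG)
    show "W h \<in> carrier G" for h by (rule Wc)
    show "\<one>\<^bsub>G\<^esub> \<in> carrier G" for h by simp
    fix h assume h: "h \<in> HF"
    have "W h \<in> sw_H \<Gamma> G W (vt h)"
    proof (cases "h = hs (vt h)")
      case True
      then have "W h = sw_omega \<Gamma> G W (vt h)" using om[OF vtx_in[OF h]] by (simp add: W_def)
      then show ?thesis unfolding sw_H_def by (simp add: generate.incl)
    next
      case False
      then have "W h = \<one>\<^bsub>G\<^esub>" using carG by (simp add: W_def)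
      then show ?thesis unfolding sw_H_def by (simp add: generate.one)
    qed
    then show "W h \<otimes>\<^bsub>G\<^esub> \<one>\<^bsub>G\<^esub> \<otimes>\<^bsub>G\<^esub> inv\<^bsub>G\<^esub> \<one>\<^bsub>G\<^esub> \<in> sw_H \<Gamma> G W (vt h)"
      using Wc by simp
  qed
  qed
  interpret cov \<Gamma> G W "\<lambda>_. \<one>\<^bsub>G\<^esub>" by (rule cv)
  have vsame: "V x g = V x' g" if "x \<in> HF" "x' \<in> HF" "vt x = vt x'" "g \<in> carrier G" for x x' g
    using V_eq that by simp
  have cl1: "\<forall>h' \<in> AT \<nu>. (V h g, V h' g) \<in> EEC\<^sup>*"
    if "(\<mu>, \<nu>) \<in> EE\<^sup>*" "h \<in> AT \<mu>" "g \<in> carrier G" for \<mu> \<nu> h g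
    using that(1)
  proof (induction rule: rtrancl_induct)
    case base
    show ?case
    proof
      fix h' assume h': "h' \<in> AT \<mu>"
      have "V h g = V h' g" using vsame[of h h' g] h' that by (simp add: at_iff)
      then show "(V h g, V h' g) \<in> EEC\<^sup>*" by simp
    qed
  next
    case (step y z)
    then obtain k where k: "k \<in> HF" "y = vt k" "z = vt (mt k)" unfolding EE_def by blast
    have "(V h g, V k g) \<in> EEC\<^sup>*" using step.IH k by (simp add: at_iff)
    moreover have "(V k g, V (mt k) g) \<in> EEC"
    proof -
      have "(k, g) \<in> bg_half CV" using k that by (simp add: CV_half)
      then have "(bg_vtx CV (k, g), bg_vtx CV (bg_mate CV (k, g))) \<in> EEC" by blast
      then show ?thesis by (simp add: CV_vtx CV_mate)
    qed
    ultimately have r: "(V h g, V (mt k) g) \<in> EEC\<^sup>*" by (rule rtrancl_into_rtrancl)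
    show ?case
    proof
      fix h' assume h': "h' \<in> AT z"
      have "V (mt k) g = V h' g"
        using vsame[of "mt k" h' g] mate_in k h' \<open>g \<in> carrier G\<close> by (auto simp: at_iff)
      then show "(V h g, V h' g) \<in> EEC\<^sup>*" using r by simp
    qed
  qed
  obtain h0 where h0: "h0 \<in> HF" using half_ne by blast
  define b where "b = V h0 \<one>\<^bsub>G\<^esub>"
  have shift: "V (hs \<nu>) g = V (hs \<nu>) (g \<otimes>\<^bsub>G\<^esub> a \<nu>)" if \<nu>: "\<nu> \<in> VS" and g: "g \<in> carrier G" for \<nu> g
  proof -
    have hsH: "hs \<nu> \<in> HF" "vt (hs \<nu>) = \<nu>" using hs[OF \<nu>] by (auto simp: at_iff)
    have aH: "a \<nu> \<in> HH \<nu>" using om[OF \<nu>] unfolding sw_H_def by (metis generate.incl singletonI)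
    have "HH \<nu> #>\<^bsub>G\<^esub> (g \<otimes>\<^bsub>G\<^esub> a \<nu>) = HH \<nu> #>\<^bsub>G\<^esub> (a \<nu> \<otimes>\<^bsub>G\<^esub> g)" using g ac by (simp add: G.m_comm)
    also have "\<dots> = (HH \<nu> #>\<^bsub>G\<^esub> a \<nu>) #>\<^bsub>G\<^esub> g" using g ac HH_car by (simp add: G.coset_mult_assoc)
    also have "\<dots> = HH \<nu> #>\<^bsub>G\<^esub> g" using G.coset_join2[OF ac HH_sub aH] by simp
    finally show ?thesis using V_eq[OF hsH(1) hsH(1) g] g ac hsH by simp
  qed
  have gen: "g < L \<and> (b, V h0 g) \<in> EEC\<^sup>*" if "g \<in> genset L Ms" for g
    using that
  proof induction
    case g0 then show ?case using L0 b_def carG by simp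
  next
    case (gs x m)
    obtain \<nu> where \<nu>: "\<nu> \<in> VS" "m = bg_mult \<Gamma> \<nu>" using gs.hyps(2) Ms_def by blast
    have x: "x \<in> carrier G" using gs.IH carG by simp
    have xa: "x \<otimes>\<^bsub>G\<^esub> a \<nu> \<in> carrier G" using x ac by simp
    have e: "x \<otimes>\<^bsub>G\<^esub> a \<nu> = (x + L div m) mod L" using carG \<nu> by (simp add: a_def mod_add_right_eq)
    have hsH: "hs \<nu> \<in> HF" "vt (hs \<nu>) = \<nu>" using hs[OF \<nu>(1)] by (auto simp: at_iff)
    have "(V h0 x, V (hs \<nu>) x) \<in> EEC\<^sup>*"
      using cl1[OF conn[OF vtx_in[OF h0] \<nu>(1)], of h0 x] h0 hs[OF \<nu>(1)] x by (simp add: at_iff)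
    moreover have "(V (hs \<nu>) (x \<otimes>\<^bsub>G\<^esub> a \<nu>), V h0 (x \<otimes>\<^bsub>G\<^esub> a \<nu>)) \<in> EEC\<^sup>*"
      using cl1[OF conn[OF \<nu>(1) vtx_in[OF h0]], of "hs \<nu>" "x \<otimes>\<^bsub>G\<^esub> a \<nu>"] h0 hs[OF \<nu>(1)] xa
      by (simp add: at_iff)
    ultimately have "(V h0 x, V h0 (x \<otimes>\<^bsub>G\<^esub> a \<nu>)) \<in> EEC\<^sup>*" using shift[OF \<nu>(1) x] by simp
    then have "(b, V h0 (x \<otimes>\<^bsub>G\<^esub> a \<nu>)) \<in> EEC\<^sup>*"
      using rtrancl_trans[OF conjunct2[OF gs.IH]] by blast
    then show ?case using e L0 by simp
  qed
  have cn: "(b, bg_vtx CV x) \<in> EEC\<^sup>*" if x: "x \<in> HF \<times> carrier G" for x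
  proof -
    obtain h g where hg: "x = (h, g)" "h \<in> HF" "g \<in> carrier G" using x by auto
    have "g \<in> genset L Ms" using genset_all[OF finMs nz L_def] hg carG by simp
    then have "(b, V h0 g) \<in> EEC\<^sup>*" using gen by simp
    moreover have "(V h0 g, V h g) \<in> EEC\<^sup>*"
      using cl1[OF conn[OF vtx_in[OF h0] vtx_in[OF hg(2)]], of h0 g] h0 hg by (simp add: at_iff)
    ultimately have "(b, V h g) \<in> EEC\<^sup>*" by (rule rtrancl_trans)
    then show ?thesis using hg by (simp add: CV_vtx)
  qed
  have bw: "sw_ord \<Gamma> G W \<mu> dvd bg_mult \<Gamma> \<mu>" if "\<mu> \<in> VS" for \<mu> using sword[OF that] by simp
  have qc: "quantized_brauer_graph CV" by (rule CV_qbg[OF cv q bw cn])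
  have "tower_step \<Gamma> G W"
    unfolding tower_step_def brauer_weighting_def successor_weighting_def
    using cg finG q qc bw Wc by simp
  moreover have "\<forall>\<mu> \<in> bg_verts CV. bg_mult CV \<mu> = 1"
  proof
    fix \<mu>' assume "\<mu>' \<in> bg_verts CV"
    then obtain h g where hg: "\<mu>' = V h g" "h \<in> HF" "g \<in> carrier G" unfolding CV_verts by auto
    have "vt h \<in> VS" using vtx_in hg by simp
    then have "bg_mult \<Gamma> (vt h) > 0" using mult_ge1 by fastforce
    then show "bg_mult CV \<mu>' = 1" using hg sword \<open>vt h \<in> VS\<close> by (simp add: V_def CV_mult)
  qed
  ultimately show ?thesis by blast
qed




context bgraph begin

lemma edge_eq_iff: "h \<in> HF \<Longrightarrow> h' \<in> HF \<Longrightarrow> bg_edge \<Gamma> h = bg_edge \<Gamma> h' \<longleftrightarrow> h' = h \<or> h' = mt h"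
  unfolding bg_edge_def using mate_mate mate_neq by (auto simp: doubleton_eq_iff)

lemma span:
  obtains T where "T \<subseteq> HF" "\<forall>x\<in>T. mt x \<in> T"
    "\<forall>\<mu>\<in>VS. \<forall>\<nu>\<in>VS. (\<mu>, \<nu>) \<in> {(vt h, vt (mt h)) | h. h \<in> T}\<^sup>*"
    "\<forall>h\<in>T. vt (mt h) \<noteq> vt h"
    "\<forall>h\<in>T. \<forall>h'\<in>T. bg_edge \<Gamma> h \<noteq> bg_edge \<Gamma> h' \<longrightarrow> bg_endpoints \<Gamma> h \<noteq> bg_endpoints \<Gamma> h'"
proof -
  define ET where "ET S = {(vt h, vt (mt h)) | h. h \<in> S}" for S
  define good where "good S \<longleftrightarrow> S \<subseteq> HF \<and> (\<forall>x\<in>S. mt x \<in> S) \<and> (\<forall>\<mu>\<in>VS. \<forall>\<nu>\<in>VS. (\<mu>, \<nu>) \<in> (ET S)\<^sup>*)" for S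
  have "good HF" using mate_in conn unfolding good_def ET_def EE_def by auto
  then obtain T where T: "good T" and Tmin: "\<forall>S. good S \<longrightarrow> card T \<le> card S"
    using ex_has_least_nat[of good HF card] by blast
  have TH: "T \<subseteq> HF" using T good_def by simp
  have finT: "finite T" using TH fin_half finite_subset by blast
  have Tm: "\<forall>x\<in>T. mt x \<in> T" using T good_def by simp
  have Tc: "\<forall>\<mu>\<in>VS. \<forall>\<nu>\<in>VS. (\<mu>, \<nu>) \<in> (ET T)\<^sup>*" using T good_def by simp
  have nosub: False if x: "x \<in> T" and sub: "ET T - Id \<subseteq> ET (T - {x, mt x})" for x
  proof -
    let ?S = "T - {x, mt x}"
    have "good ?S" unfolding good_def
    proof (intro conjI)
      show "?S \<subseteq> HF" using TH by auto
      show "\<forall>y\<in>?S. mt y \<in> ?S"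
      proof
        fix y assume y: "y \<in> ?S"
        have yH: "y \<in> HF" "x \<in> HF" using y x TH by auto
        have "mt y \<noteq> x" using y mate_mate yH by force
        moreover have "mt y \<noteq> mt x"
        proof
          assume "mt y = mt x"
          then have "mt (mt y) = mt (mt x)" by simp
          then have "y = x" using mate_mate yH by simp
          then show False using y by simp
        qed
        ultimately show "mt y \<in> ?S" using y Tm by auto
      qed
      show "\<forall>\<mu>\<in>VS. \<forall>\<nu>\<in>VS. (\<mu>, \<nu>) \<in> (ET ?S)\<^sup>*"
      proof (intro ballI)
        fix \<mu> \<nu> assume "\<mu> \<in> VS" "\<nu> \<in> VS"
        then have "(\<mu>, \<nu>) \<in> (ET T - Id)\<^sup>*" unfolding rtrancl_r_diff_Id using Tc by simp
        then show "(\<mu>, \<nu>) \<in> (ET ?S)\<^sup>*" using rtrancl_mono[OF sub] by blast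
      qed
    qed
    moreover have "card ?S < card T" using x finT by (intro psubset_card_mono) auto
    ultimately show False using Tmin by fastforce
  qed
  show ?thesis
  proof (rule that)
    show "T \<subseteq> HF" by (rule TH)
    show "\<forall>x\<in>T. mt x \<in> T" by (rule Tm)
    show "\<forall>\<mu>\<in>VS. \<forall>\<nu>\<in>VS. (\<mu>, \<nu>) \<in> {(vt h, vt (mt h)) | h. h \<in> T}\<^sup>*" using Tc unfolding ET_def .
    show "\<forall>h\<in>T. vt (mt h) \<noteq> vt h"
    proof (intro ballI notI)
      fix h assume h: "h \<in> T" and l: "vt (mt h) = vt h"
      have hH: "h \<in> HF" using h TH by auto
      have "ET T - Id \<subseteq> ET (T - {h, mt h})"
      proof
        fix p assume "p \<in> ET T - Id"
        then obtain y where y: "y \<in> T" "p = (vt y, vt (mt y))" "vt y \<noteq> vt (mt y)" unfolding ET_def by auto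
        have "y \<noteq> h" using y l by auto
        moreover have "y \<noteq> mt h" using y l mate_mate hH by auto
        ultimately show "p \<in> ET (T - {h, mt h})" using y unfolding ET_def by blast
      qed
      then show False using nosub h by blast
    qed
    show "\<forall>h\<in>T. \<forall>h'\<in>T. bg_edge \<Gamma> h \<noteq> bg_edge \<Gamma> h' \<longrightarrow> bg_endpoints \<Gamma> h \<noteq> bg_endpoints \<Gamma> h'"
    proof (intro ballI impI notI)
      fix h h' assume h: "h \<in> T" and h': "h' \<in> T" and ne: "bg_edge \<Gamma> h \<noteq> bg_edge \<Gamma> h'"
        and ep: "bg_endpoints \<Gamma> h = bg_endpoints \<Gamma> h'"
      have hH: "h \<in> HF" "h' \<in> HF" using h h' TH by auto
      have n1a: "h \<noteq> h'" using ne by auto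
      have n1b: "h \<noteq> mt h'"
      proof
        assume "h = mt h'"
        then have "bg_edge \<Gamma> h' = bg_edge \<Gamma> h" using edge_eq_iff[of h' h] hH by simp
        then show False using ne by simp
      qed
      note n1 = n1a n1b
      have n2a: "mt h \<noteq> h'" using n1 mate_mate hH by auto
      have n2b: "mt h \<noteq> mt h'"
      proof
        assume "mt h = mt h'"
        then have "mt (mt h) = mt (mt h')" by simp
        then show False using n1 mate_mate hH by simp
      qed
      note n2 = n2a n2b
      have S1: "h \<in> T - {h', mt h'}" "mt h \<in> T - {h', mt h'}" using h Tm n1 n2 by auto
      have e1: "(vt h, vt (mt h)) \<in> ET (T - {h', mt h'})" using S1 unfolding ET_def by blast
      have e2: "(vt (mt h), vt h) \<in> ET (T - {h', mt h'})"
        using S1 mate_mate[OF hH(1)] unfolding ET_def by (metis (mono_tags, lifting) mem_Collect_eq)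
      have epx: "{vt h, vt (mt h)} = {vt h', vt (mt h')}" using ep unfolding bg_endpoints_def .
      have "ET T - Id \<subseteq> ET (T - {h', mt h'})"
      proof
        fix p assume "p \<in> ET T - Id"
        then obtain y where y: "y \<in> T" "p = (vt y, vt (mt y))" unfolding ET_def by auto
        show "p \<in> ET (T - {h', mt h'})"
        proof (cases "y = h' \<or> y = mt h'")
          case False then show ?thesis using y unfolding ET_def by blast
        next
          case True
          then have "p = (vt h', vt (mt h')) \<or> p = (vt (mt h'), vt h')" using y mate_mate hH by auto
          then have "p = (vt h, vt (mt h)) \<or> p = (vt (mt h), vt h)" using epx by (auto simp: doubleton_eq_iff)
          then show ?thesis using e1 e2 by auto
        qed
      qed
      then show False using nosub h' by blast
    qed
  qed
qed

end

context comm_group begin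

lemma cancel_inv_l:
  assumes "g \<in> carrier G" "a \<in> carrier G" "b \<in> carrier G" "g \<otimes> inv a = g \<otimes> inv b"
  shows "a = b"
proof -
  have "inv a \<otimes> g = inv b \<otimes> g" using assms by (simp add: m_comm)
  then have "inv a = inv b" using assms by simp
  then have "inv (inv a) = inv (inv b)" by simp
  then show ?thesis using assms by simp
qed

lemma mul_inv_mul:
  assumes "x \<in> carrier G" "y \<in> carrier G" "z \<in> carrier G"
  shows "(x \<otimes> inv y) \<otimes> (y \<otimes> z) = x \<otimes> z"
proof -
  have "(x \<otimes> inv y) \<otimes> (y \<otimes> z) = x \<otimes> (inv y \<otimes> (y \<otimes> z))" using assms by (simp add: m_assoc)
  moreover have "inv y \<otimes> (y \<otimes> z) = z" using assms by (simp add: m_assoc[symmetric])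
  ultimately show ?thesis by simp
qed

lemma two_eqs:
  assumes c: "g \<in> carrier G" "g' \<in> carrier G" "a \<in> carrier G" "a' \<in> carrier G" "b \<in> carrier G" "b' \<in> carrier G"
    and e1: "g \<otimes> inv a = g' \<otimes> inv a'" and e2: "g \<otimes> inv b = g' \<otimes> inv b'"
  shows "a \<otimes> b' = a' \<otimes> b"
proof -
  have "(g \<otimes> inv a) \<otimes> (a \<otimes> a') = (g' \<otimes> inv a') \<otimes> (a' \<otimes> a)" using e1 c by (simp add: m_comm)
  then have f1: "g \<otimes> a' = g' \<otimes> a" using c by (simp add: mul_inv_mul)
  have "(g \<otimes> inv b) \<otimes> (b \<otimes> b') = (g' \<otimes> inv b') \<otimes> (b' \<otimes> b)" using e2 c by (simp add: m_comm)
  then have f2: "g \<otimes> b' = g' \<otimes> b" using c by (simp add: mul_inv_mul)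
  have "(g \<otimes> g') \<otimes> (a' \<otimes> b) = (g \<otimes> a') \<otimes> (g' \<otimes> b)" using c by (simp add: m_ac)
  also have "\<dots> = (g' \<otimes> a) \<otimes> (g \<otimes> b')" using f1 f2 by simp
  also have "\<dots> = (g \<otimes> g') \<otimes> (a \<otimes> b')" using c by (simp add: m_ac)
  finally have "(a' \<otimes> b) \<otimes> (g \<otimes> g') = (a \<otimes> b') \<otimes> (g \<otimes> g')" using c by (simp add: m_comm)
  then show ?thesis using c by simp
qed

end




lemma constrB:
  fixes \<Gamma> :: "('v, 'h, 'k::field) qbg"
  assumes q: "quantized_brauer_graph \<Gamma>" and m1: "\<forall>\<mu> \<in> bg_verts \<Gamma>. bg_mult \<Gamma> \<mu> = 1"
  shows "\<exists>(G::nat monoid) W. tower_step \<Gamma> G W \<and>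
           (\<forall>\<mu> \<in> bg_verts (bg_cover \<Gamma> G W). bg_mult (bg_cover \<Gamma> G W) \<mu> = 1) \<and>
           \<not> has_loop (bg_cover \<Gamma> G W) \<and> \<not> has_multiple_edges (bg_cover \<Gamma> G W)"
proof -
  have bg: "brauer_graph \<Gamma>" using q unfolding quantized_brauer_graph_def by simp
  interpret bgraph \<Gamma> using bg by (simp add: bgraph_def)
  obtain T where TH: "T \<subseteq> HF" and Tm: "\<forall>x\<in>T. mt x \<in> T"
    and Tc: "\<forall>\<mu>\<in>VS. \<forall>\<nu>\<in>VS. (\<mu>, \<nu>) \<in> {(vt h, vt (mt h)) | h. h \<in> T}\<^sup>*"
    and Tl: "\<forall>h\<in>T. vt (mt h) \<noteq> vt h"
    and Tp: "\<forall>h\<in>T. \<forall>h'\<in>T. bg_edge \<Gamma> h \<noteq> bg_edge \<Gamma> h' \<longrightarrow> bg_endpoints \<Gamma> h \<noteq> bg_endpoints \<Gamma> h'"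
    by (rule span)
  obtain idx :: "'h \<Rightarrow> nat" and n where idx: "idx ` HF = {i. i < n}" "inj_on idx HF"
    using finite_imp_inj_to_nat_seg[OF fin_half] by blast
  have idxn: "idx x < n" if "x \<in> HF" for x using idx that by blast
  define NT where "NT = HF - T"
  have NTm: "mt x \<in> NT" if x: "x \<in> NT" for x
  proof -
    have xH: "x \<in> HF" "x \<notin> T" using x NT_def by auto
    have "mt x \<notin> T"
    proof
      assume "mt x \<in> T"
      then have "mt (mt x) \<in> T" using Tm by blast
      then show False using xH mate_mate by simp
    qed
    then show ?thesis using xH mate_in NT_def by simp
  qed
  define h1 where "h1 = (SOME h. h \<in> NT)"
  define c0 where "c0 x = (if x \<in> T then 0 else if x = h1 then 1 else if x = mt h1 then 0
      else if idx x < idx (mt x) then idx x + 2 else (0::nat))" for x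
  define N where "N = (if NT = {} then 1 else 2 * n + 5)"
  have N0: "N > 0" unfolding N_def by simp
  have T0: "c0 x = 0" if "x \<in> T" for x using that c0_def by simp
  have h1NT: "h1 \<in> NT" if "x \<in> NT" for x unfolding h1_def using that by (rule someI)
  have cbound: "c0 x \<le> n + 1" if "x \<in> HF" for x using idxn[OF that] unfolding c0_def by auto
  have csmall: "c0 x + c0 y < N" if "x \<in> HF" "y \<in> HF" for x y
  proof (cases "NT = {}")
    case True
    then have "x \<in> T" "y \<in> T" using that NT_def by auto
    then show ?thesis using T0 N0 by simp
  next
    case False
    then show ?thesis using cbound[OF that(1)] cbound[OF that(2)] unfolding N_def by simp
  qed
  have N1: "c0 x = 0 \<longleftrightarrow> c0 (mt x) \<noteq> 0" if x: "x \<in> NT" for x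
  proof -
    have xH: "x \<in> HF" "x \<notin> T" using x NT_def by auto
    have mx: "mt x \<notin> T" "mt x \<in> HF" using NTm[OF x] NT_def by auto
    have h1: "h1 \<in> NT" using h1NT[OF x] .
    have h1H: "h1 \<in> HF" using h1 NT_def by auto
    have mm: "mt (mt x) = x" using mate_mate xH by simp
    show ?thesis
    proof (cases "x = h1")
      case True
      then have "mt x \<noteq> h1" using mate_neq h1H by simp
      then show ?thesis using True xH mx unfolding c0_def by simp
    next
      case nh1: False
      show ?thesis
      proof (cases "x = mt h1")
        case True
        then have "mt x = h1" using mate_mate h1H by simp
        moreover have "x \<noteq> h1" using nh1 .
        ultimately show ?thesis using True xH mx unfolding c0_def by simp
      next
        case nmh1: False
        have a: "mt x \<noteq> h1" using nmh1 mm by auto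
        have b: "mt x \<noteq> mt h1"
        proof
          assume "mt x = mt h1"
          then have "mt (mt x) = mt (mt h1)" by simp
          then show False using mm mate_mate h1H nh1 by simp
        qed
        have "idx x \<noteq> idx (mt x)" using inj_onD[OF idx(2)] xH mx mate_neq by metis
        then show ?thesis using nh1 nmh1 a b xH mx mm unfolding c0_def by auto
      qed
    qed
  qed
  have N2: "x = y" if x: "x \<in> NT" and y: "y \<in> NT" and e: "c0 x = c0 y" and nz: "c0 x \<noteq> 0" for x y
  proof -
    have xH: "x \<in> HF" "x \<notin> T" using x NT_def by auto
    have yH: "y \<in> HF" "y \<notin> T" using y NT_def by auto
    have fx: "(x = h1 \<and> c0 x = 1) \<or> c0 x = 0 \<or> (x \<noteq> h1 \<and> c0 x = idx x + 2)"
      using xH(2) unfolding c0_def by simp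
    have fy: "(y = h1 \<and> c0 y = 1) \<or> c0 y = 0 \<or> (y \<noteq> h1 \<and> c0 y = idx y + 2)"
      using yH(2) unfolding c0_def by simp
    show ?thesis
    proof (cases "x = h1")
      case True
      then have "c0 x = 1" using xH(2) unfolding c0_def by simp
      then have "y = h1" using fy e by auto
      then show ?thesis using True by simp
    next
      case False
      then have cx: "c0 x = idx x + 2" using fx nz by simp
      then have "y \<noteq> h1 \<and> c0 y = idx y + 2" using fy e by auto
      then have "idx x = idx y" using cx e by simp
      then show ?thesis using inj_onD[OF idx(2)] xH yH by blast
    qed
  qed
  define G where "G = Zm N"
  have cg: "comm_group G" using Zm_cg[OF N0] G_def by simp
  interpret G: comm_group G by (rule cg)
  have carG: "carrier G = {..<N}" "\<one>\<^bsub>G\<^esub> = 0" "\<And>x y. x \<otimes>\<^bsub>G\<^esub> y = (x + y) mod N"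
    by (simp_all add: G_def Zm_simps)
  have finG: "finite (carrier G)" using carG by simp
  have cc: "c0 x \<in> carrier G" if "x \<in> HF" for x using csmall[OF that that] carG by simp
  have csum: "c0 x \<otimes>\<^bsub>G\<^esub> c0 y = c0 x + c0 y" if "x \<in> HF" "y \<in> HF" for x y
    using csmall[OF that] carG by simp
  define W where "W x = c0 (sc x) \<otimes>\<^bsub>G\<^esub> inv\<^bsub>G\<^esub> c0 x" for x
  have Wc: "W x \<in> carrier G" if "x \<in> HF" for x using cc that succ_in by (simp add: W_def)
  have Wcx: "W x \<otimes>\<^bsub>G\<^esub> c0 x = c0 (sc x)" if x: "x \<in> HF" for x
    using cc[OF x] cc[OF succ_in[OF x]] by (simp add: W_def G.m_assoc)
  have cv: "cov \<Gamma> G W c0"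
  proof (rule cov.intro)
    show "bgraph \<Gamma>" using bg by (simp add: bgraph_def)
  next
    show "cov_axioms \<Gamma> G W c0"
    proof (rule cov_axioms.intro)
      show "comm_group G" by (rule cg)
      show "finite (carrier G)" by (rule finG)
      show "W h \<in> carrier G" if "h \<in> HF" for h using Wc that .
      show "c0 h \<in> carrier G" if "h \<in> HF" for h using cc that .
      fix h assume h: "h \<in> HF"
      have "W h \<otimes>\<^bsub>G\<^esub> c0 h \<otimes>\<^bsub>G\<^esub> inv\<^bsub>G\<^esub> c0 (sc h) = \<one>\<^bsub>G\<^esub>"
        using Wcx[OF h] cc[OF succ_in[OF h]] by simp
      then show "W h \<otimes>\<^bsub>G\<^esub> c0 h \<otimes>\<^bsub>G\<^esub> inv\<^bsub>G\<^esub> c0 (sc h) \<in> sw_H \<Gamma> G W (vt h)"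
        unfolding sw_H_def by (simp add: generate.one)
    qed
  qed
  interpret cov \<Gamma> G W c0 by (rule cv)
  have om: "om \<mu> = \<one>\<^bsub>G\<^esub>" for \<mu>
  proof -
    have sub: "AT \<mu> \<subseteq> HF" by (auto simp: at_iff)
    have "om \<mu> \<otimes>\<^bsub>G\<^esub> finprod G c0 (AT \<mu>) = finprod G (\<lambda>x. W x \<otimes>\<^bsub>G\<^esub> c0 x) (AT \<mu>)"
      unfolding sw_omega_def using sub Wc cc by (subst G.finprod_multf) (auto simp: Pi_def)
    also have "\<dots> = finprod G (\<lambda>x. c0 (sc x)) (AT \<mu>)"
      using sub Wcx by (intro G.finprod_cong') (auto simp: Pi_def cc succ_in)
    also have "\<dots> = finprod G c0 (sc ` AT \<mu>)"
      using sub cc inj_on_subset[OF inj_succ sub]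
      by (subst G.finprod_reindex) (auto simp: Pi_def succ_in)
    also have "\<dots> = finprod G c0 (AT \<mu>)" by (simp add: succ_image_at)
    finally have e: "om \<mu> \<otimes>\<^bsub>G\<^esub> finprod G c0 (AT \<mu>) = finprod G c0 (AT \<mu>)" .
    have fc: "finprod G c0 (AT \<mu>) \<in> carrier G" using sub cc by (intro G.finprod_closed) (auto simp: Pi_def)
    show ?thesis using e G.r_cancel_one[OF fc omega_in] by simp
  qed
  have sword: "sw_ord \<Gamma> G W \<mu> = 1" for \<mu> unfolding sw_ord_def using om by simp
  have HH1: "HH \<mu> = {\<one>\<^bsub>G\<^esub>}" for \<mu> using HH_pow[of \<mu>] om by simp
  have Veq: "V h g = V h' g' \<longleftrightarrow> vt h = vt h' \<and> g \<otimes>\<^bsub>G\<^esub> inv\<^bsub>G\<^esub> c0 h = g' \<otimes>\<^bsub>G\<^esub> inv\<^bsub>G\<^esub> c0 h'"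
    if "h \<in> HF" "h' \<in> HF" "g \<in> carrier G" "g' \<in> carrier G" for h h' g g'
  proof -
    have "{\<one>\<^bsub>G\<^esub>} #>\<^bsub>G\<^esub> x = {x}" if "x \<in> carrier G" for x
      using that unfolding r_coset_def by simp
    then show ?thesis using V_eq[OF that] HH1 that cc by simp
  qed
  have vsame: "V x (l \<otimes>\<^bsub>G\<^esub> c0 x) = V x' (l \<otimes>\<^bsub>G\<^esub> c0 x')"
    if "x \<in> HF" "x' \<in> HF" "vt x = vt x'" "l \<in> carrier G" for x x' l
  proof -
    have "(l \<otimes>\<^bsub>G\<^esub> c0 x) \<otimes>\<^bsub>G\<^esub> inv\<^bsub>G\<^esub> c0 x = l" using that cc by (simp add: G.m_assoc)
    moreover have "(l \<otimes>\<^bsub>G\<^esub> c0 x') \<otimes>\<^bsub>G\<^esub> inv\<^bsub>G\<^esub> c0 x' = l" using that cc by (simp add: G.m_assoc)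
    ultimately show ?thesis using Veq that cc by simp
  qed
  have edgeV: "(V k l, V (mt k) l) \<in> EEC" if "k \<in> HF" "l \<in> carrier G" for k l
  proof -
    have "(k, l) \<in> bg_half CV" using that by (simp add: CV_half)
    then have "(bg_vtx CV (k, l), bg_vtx CV (bg_mate CV (k, l))) \<in> EEC" by blast
    then show ?thesis by (simp add: CV_vtx CV_mate)
  qed
  have clT: "\<forall>h' \<in> AT \<nu>. (V h (l \<otimes>\<^bsub>G\<^esub> c0 h), V h' (l \<otimes>\<^bsub>G\<^esub> c0 h')) \<in> EEC\<^sup>*"
    if "(\<mu>, \<nu>) \<in> {(vt h, vt (mt h)) | h. h \<in> T}\<^sup>*" "h \<in> AT \<mu>" "l \<in> carrier G" for \<mu> \<nu> h l
    using that(1)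
  proof (induction rule: rtrancl_induct)
    case base
    show ?case
    proof
      fix h' assume h': "h' \<in> AT \<mu>"
      have "V h (l \<otimes>\<^bsub>G\<^esub> c0 h) = V h' (l \<otimes>\<^bsub>G\<^esub> c0 h')" using vsame[of h h' l] h' that by (simp add: at_iff)
      then show "(V h (l \<otimes>\<^bsub>G\<^esub> c0 h), V h' (l \<otimes>\<^bsub>G\<^esub> c0 h')) \<in> EEC\<^sup>*" by simp
    qed
  next
    case (step y z)
    then obtain k where k: "k \<in> T" "y = vt k" "z = vt (mt k)" by blast
    have kH: "k \<in> HF" "mt k \<in> HF" "mt k \<in> T" using k TH Tm by auto
    have "(V h (l \<otimes>\<^bsub>G\<^esub> c0 h), V k (l \<otimes>\<^bsub>G\<^esub> c0 k)) \<in> EEC\<^sup>*" using step.IH k kH by (simp add: at_iff)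
    moreover have "(V k (l \<otimes>\<^bsub>G\<^esub> c0 k), V (mt k) (l \<otimes>\<^bsub>G\<^esub> c0 (mt k))) \<in> EEC"
    proof -
      have lk: "l \<otimes>\<^bsub>G\<^esub> c0 k \<in> carrier G" using cc kH that by simp
      have ck: "c0 (mt k) = c0 k" using T0[OF k(1)] T0[OF kH(3)] by simp
      have "(V k (l \<otimes>\<^bsub>G\<^esub> c0 k), V (mt k) (l \<otimes>\<^bsub>G\<^esub> c0 k)) \<in> EEC" by (rule edgeV[OF kH(1) lk])
      then show ?thesis by (simp only: ck)
    qed
    ultimately have r: "(V h (l \<otimes>\<^bsub>G\<^esub> c0 h), V (mt k) (l \<otimes>\<^bsub>G\<^esub> c0 (mt k))) \<in> EEC\<^sup>*"
      by (rule rtrancl_into_rtrancl)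
    show ?case
    proof
      fix h' assume h': "h' \<in> AT z"
      have "V (mt k) (l \<otimes>\<^bsub>G\<^esub> c0 (mt k)) = V h' (l \<otimes>\<^bsub>G\<^esub> c0 h')"
        using vsame[of "mt k" h' l] kH k h' that by (auto simp: at_iff)
      then show "(V h (l \<otimes>\<^bsub>G\<^esub> c0 h), V h' (l \<otimes>\<^bsub>G\<^esub> c0 h')) \<in> EEC\<^sup>*" using r by simp
    qed
  qed
  have clT2: "(V h (l \<otimes>\<^bsub>G\<^esub> c0 h), V h' (l \<otimes>\<^bsub>G\<^esub> c0 h')) \<in> EEC\<^sup>*"
    if "h \<in> HF" "h' \<in> HF" "l \<in> carrier G" for h h' l
    using clT[OF bspec[OF bspec[OF Tc vtx_in[OF that(1)]] vtx_in[OF that(2)]], of h l] that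
    by (simp add: at_iff)
  obtain h0 where h0: "h0 \<in> HF" using half_ne by blast
  define b where "b = V h0 (\<one>\<^bsub>G\<^esub> \<otimes>\<^bsub>G\<^esub> c0 h0)"
  have reach: "(b, V h0 (l \<otimes>\<^bsub>G\<^esub> c0 h0)) \<in> EEC\<^sup>*" if l: "l \<in> carrier G" for l
  proof (cases "NT = {}")
    case True
    then have "l = \<one>\<^bsub>G\<^esub>" using l carG N_def by simp
    then show ?thesis unfolding b_def by simp
  next
    case False
    then obtain x0 where "x0 \<in> NT" by blast
    then have h1: "h1 \<in> NT" "mt h1 \<in> NT" using h1NT NTm by auto
    have h1H: "h1 \<in> HF" "mt h1 \<in> HF" "h1 \<notin> T" using h1 NT_def by auto
    have ch1: "c0 h1 = 1" using h1H unfolding c0_def by simp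
    have cmh1: "c0 (mt h1) = 0" using h1H mate_neq unfolding c0_def by simp
    have "(b, V h0 ((k mod N) \<otimes>\<^bsub>G\<^esub> c0 h0)) \<in> EEC\<^sup>*" for k
    proof (induction k)
      case 0 then show ?case using carG b_def by simp
    next
      case (Suc k)
      define l0 where "l0 = k mod N"
      have l0: "l0 \<in> carrier G" using carG N0 l0_def by simp
      have l1: "l0 \<otimes>\<^bsub>G\<^esub> c0 h1 \<in> carrier G" using l0 cc h1H by simp
      have "(V h0 (l0 \<otimes>\<^bsub>G\<^esub> c0 h0), V h1 (l0 \<otimes>\<^bsub>G\<^esub> c0 h1)) \<in> EEC\<^sup>*" using clT2 h0 h1H l0 by simp
      moreover have "(V h1 (l0 \<otimes>\<^bsub>G\<^esub> c0 h1), V (mt h1) (l0 \<otimes>\<^bsub>G\<^esub> c0 h1)) \<in> EEC"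
        using edgeV h1H l1 by simp
      moreover have "V (mt h1) (l0 \<otimes>\<^bsub>G\<^esub> c0 h1) = V (mt h1) ((l0 \<otimes>\<^bsub>G\<^esub> c0 h1) \<otimes>\<^bsub>G\<^esub> c0 (mt h1))"
        using cmh1 carG l1 by simp
      moreover have "(V (mt h1) ((l0 \<otimes>\<^bsub>G\<^esub> c0 h1) \<otimes>\<^bsub>G\<^esub> c0 (mt h1)), V h0 ((l0 \<otimes>\<^bsub>G\<^esub> c0 h1) \<otimes>\<^bsub>G\<^esub> c0 h0)) \<in> EEC\<^sup>*"
        using clT2 h0 h1H l1 by simp
      ultimately have "(V h0 (l0 \<otimes>\<^bsub>G\<^esub> c0 h0), V h0 ((l0 \<otimes>\<^bsub>G\<^esub> c0 h1) \<otimes>\<^bsub>G\<^esub> c0 h0)) \<in> EEC\<^sup>*"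
        by (metis (no_types, lifting) rtrancl_into_rtrancl rtrancl_trans)
      moreover have "l0 \<otimes>\<^bsub>G\<^esub> c0 h1 = Suc k mod N" using ch1 carG l0_def by (simp add: mod_Suc_eq)
      ultimately have "(V h0 (l0 \<otimes>\<^bsub>G\<^esub> c0 h0), V h0 ((Suc k mod N) \<otimes>\<^bsub>G\<^esub> c0 h0)) \<in> EEC\<^sup>*" by simp
      then have "(V h0 ((k mod N) \<otimes>\<^bsub>G\<^esub> c0 h0), V h0 ((Suc k mod N) \<otimes>\<^bsub>G\<^esub> c0 h0)) \<in> EEC\<^sup>*"
        unfolding l0_def .
      then show ?case by (rule rtrancl_trans[OF Suc.IH])
    qed
    from this[of l] show ?thesis using l carG by simp
  qed
  have cn: "(b, bg_vtx CV x) \<in> EEC\<^sup>*" if x: "x \<in> HF \<times> carrier G" for x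
  proof -
    obtain h g where hg: "x = (h, g)" "h \<in> HF" "g \<in> carrier G" using x by auto
    define l where "l = g \<otimes>\<^bsub>G\<^esub> inv\<^bsub>G\<^esub> c0 h"
    have l: "l \<in> carrier G" using hg cc l_def by simp
    have lg: "l \<otimes>\<^bsub>G\<^esub> c0 h = g" using hg cc l_def by (simp add: G.m_assoc)
    have r1: "(b, V h0 (l \<otimes>\<^bsub>G\<^esub> c0 h0)) \<in> EEC\<^sup>*" by (rule reach[OF l])
    have r2: "(V h0 (l \<otimes>\<^bsub>G\<^esub> c0 h0), V h (l \<otimes>\<^bsub>G\<^esub> c0 h)) \<in> EEC\<^sup>*" using clT2 h0 hg l by simp
    have "(b, V h (l \<otimes>\<^bsub>G\<^esub> c0 h)) \<in> EEC\<^sup>*" by (rule rtrancl_trans[OF r1 r2])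
    then have "(b, V h g) \<in> EEC\<^sup>*" using lg by simp
    then show ?thesis using hg by (simp add: CV_vtx)
  qed
  have bw: "sw_ord \<Gamma> G W \<mu> dvd bg_mult \<Gamma> \<mu>" if "\<mu> \<in> VS" for \<mu> using sword by simp
  have qc: "quantized_brauer_graph CV" by (rule CV_qbg[OF cv q bw cn])
  have ts: "tower_step \<Gamma> G W"
    unfolding tower_step_def brauer_weighting_def successor_weighting_def
    using cg finG q qc bw Wc by simp
  have mult1: "\<forall>\<mu> \<in> bg_verts CV. bg_mult CV \<mu> = 1"
  proof
    fix \<mu>' assume "\<mu>' \<in> bg_verts CV"
    then obtain h g where hg: "\<mu>' = V h g" "h \<in> HF" "g \<in> carrier G" unfolding CV_verts by auto
    have "vt h \<in> VS" using vtx_in hg by simp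
    then show "bg_mult CV \<mu>' = 1" using hg sword m1 by (simp add: V_def CV_mult)
  qed
  have noloop: "\<not> has_loop CV"
  proof
    assume "has_loop CV"
    then obtain y where y: "y \<in> bg_half CV" "bg_vtx CV (bg_mate CV y) = bg_vtx CV y"
      unfolding has_loop_def by blast
    obtain h g where hg: "y = (h, g)" "h \<in> HF" "g \<in> carrier G" using y(1) by (auto simp: CV_half)
    have mh: "mt h \<in> HF" using mate_in hg by simp
    have "V (mt h) g = V h g" using y hg by (simp add: CV_vtx CV_mate)
    then have v: "vt (mt h) = vt h" and e: "g \<otimes>\<^bsub>G\<^esub> inv\<^bsub>G\<^esub> c0 (mt h) = g \<otimes>\<^bsub>G\<^esub> inv\<^bsub>G\<^esub> c0 h"
      using Veq[OF mh hg(2) hg(3) hg(3)] by auto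
    have ce: "c0 (mt h) = c0 h" using G.cancel_inv_l[OF hg(3) cc[OF mh] cc[OF hg(2)] e] .
    show False
    proof (cases "h \<in> T")
      case True then show False using Tl v by blast
    next
      case False
      then have "h \<in> NT" using hg NT_def by simp
      then show False using N1 ce by force
    qed
  qed
  have caseA: "bg_edge CV (h, g) = bg_edge CV (h', g')"
    if hh: "h \<in> HF" "h' \<in> HF" and gg: "g \<in> carrier G" "g' \<in> carrier G"
      and e1: "V h g = V h' g'" and e2: "V (mt h) g = V (mt h') g'" for h h' g g'
  proof -
    have mhh: "mt h \<in> HF" "mt h' \<in> HF" using mate_in hh by auto
    have v1: "vt h = vt h'" and f1: "g \<otimes>\<^bsub>G\<^esub> inv\<^bsub>G\<^esub> c0 h = g' \<otimes>\<^bsub>G\<^esub> inv\<^bsub>G\<^esub> c0 h'"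
      using Veq[OF hh gg] e1 by auto
    have v2: "vt (mt h) = vt (mt h')" and f2: "g \<otimes>\<^bsub>G\<^esub> inv\<^bsub>G\<^esub> c0 (mt h) = g' \<otimes>\<^bsub>G\<^esub> inv\<^bsub>G\<^esub> c0 (mt h')"
      using Veq[OF mhh gg] e2 by auto
    have "c0 h \<otimes>\<^bsub>G\<^esub> c0 (mt h') = c0 h' \<otimes>\<^bsub>G\<^esub> c0 (mt h)"
      by (rule G.two_eqs[OF gg cc[OF hh(1)] cc[OF hh(2)] cc[OF mhh(1)] cc[OF mhh(2)] f1 f2])
    then have ns: "c0 h + c0 (mt h') = c0 h' + c0 (mt h)" using csum hh mhh by simp
    have goal: "g = g' \<and> (h' = h \<or> h' = mt h)"
    proof (cases "h \<in> T")
      case hT: True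
      show ?thesis
      proof (cases "h' \<in> T")
        case True
        have z: "c0 h = 0" "c0 h' = 0" using T0 hT True by auto
        then have ce: "c0 h' = c0 h" by simp
        have "g = g'" using f1[unfolded ce] gg cc[OF hh(1)] by simp
        moreover have "bg_endpoints \<Gamma> h = bg_endpoints \<Gamma> h'" unfolding bg_endpoints_def using v1 v2 by simp
        then have "bg_edge \<Gamma> h = bg_edge \<Gamma> h'" using Tp hT True by blast
        then have "h' = h \<or> h' = mt h" using edge_eq_iff hh by simp
        ultimately show ?thesis by simp
      next
        case False
        then have h'N: "h' \<in> NT" using hh NT_def by simp
        have "c0 h = 0" "c0 (mt h) = 0" using T0 hT Tm by auto
        then have "c0 (mt h') = c0 h'" using ns by simp
        then show ?thesis using N1[OF h'N] by force
      qed
    next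
      case hN: False
      then have hN': "h \<in> NT" using hh NT_def by simp
      show ?thesis
      proof (cases "h' \<in> T")
        case True
        have "c0 h' = 0" "c0 (mt h') = 0" using T0 True Tm by auto
        then have "c0 h = c0 (mt h)" using ns by simp
        then show ?thesis using N1[OF hN'] by force
      next
        case False
        then have h'N: "h' \<in> NT" using hh NT_def by simp
        have "h = h'"
        proof (cases "c0 h = 0")
          case False
          then have a: "c0 (mt h) = 0" using N1[OF hN'] by simp
          show ?thesis
          proof (cases "c0 h' = 0")
            case True
            then have "c0 (mt h') \<noteq> 0" using N1[OF h'N] by simp
            then show ?thesis using ns a True by simp
          next
            case False
            then have "c0 (mt h') = 0" using N1[OF h'N] by simp
            then have "c0 h = c0 h'" using ns a by simp
            then show ?thesis by (intro N2[OF hN' h'N _ \<open>c0 h \<noteq> 0\<close>])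
          qed
        next
          case True
          then have a: "c0 (mt h) \<noteq> 0" using N1[OF hN'] by simp
          show ?thesis
          proof (cases "c0 h' = 0")
            case False
            then have "c0 (mt h') = 0" using N1[OF h'N] by simp
            then show ?thesis using ns a True by simp
          next
            case True
            then have "c0 (mt h') = c0 (mt h)" using ns \<open>c0 h = 0\<close> by simp
            then have "mt h = mt h'" by (intro N2[OF NTm[OF hN'] NTm[OF h'N] _ a]) simp
            then have "mt (mt h) = mt (mt h')" by simp
            then show ?thesis using mate_mate hh by simp
          qed
        qed
        moreover have "g = g'" using f1 \<open>h = h'\<close> gg cc hh by simp
        ultimately show ?thesis by simp
      qed
    qed
    then show ?thesis unfolding bg_edge_def using mate_mate hh by (auto simp: CV_mate)
  qed
  have nomulti: "\<not> has_multiple_edges CV"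
  proof
    assume "has_multiple_edges CV"
    then obtain y y' where y: "y \<in> bg_half CV" "y' \<in> bg_half CV" "bg_edge CV y \<noteq> bg_edge CV y'"
      "bg_endpoints CV y = bg_endpoints CV y'"
      unfolding has_multiple_edges_def by blast
    obtain h g where hg: "y = (h, g)" "h \<in> HF" "g \<in> carrier G" using y(1) by (auto simp: CV_half)
    obtain h' g' where hg': "y' = (h', g')" "h' \<in> HF" "g' \<in> carrier G" using y(2) by (auto simp: CV_half)
    have mh': "mt h' \<in> HF" using mate_in hg' by simp
    have "{V h g, V (mt h) g} = {V h' g', V (mt h') g'}"
      using y(4) hg hg' unfolding bg_endpoints_def by (simp add: CV_vtx CV_mate)
    then consider "V h g = V h' g' \<and> V (mt h) g = V (mt h') g'"
      | "V h g = V (mt h') g' \<and> V (mt h) g = V h' g'" by (auto simp: doubleton_eq_iff)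
    then show False
    proof cases
      case 1
      then show False using caseA[OF hg(2) hg'(2) hg(3) hg'(3)] y(3) hg hg' by simp
    next
      case 2
      then have "bg_edge CV (h, g) = bg_edge CV (mt h', g')"
        using caseA[OF hg(2) mh' hg(3) hg'(3)] mate_mate hg' by simp
      also have "bg_edge CV (mt h', g') = bg_edge CV (h', g')"
        unfolding bg_edge_def using mate_mate hg' by (auto simp: CV_mate)
      finally show False using y(3) hg hg' by simp
    qed
  qed
  show ?thesis using ts mult1 noloop nomulti by blast
qed



theorem theorem6p7:
  fixes \<Gamma>0 :: "('v, 'h, 'k::field) qbg"
  assumes "quantized_brauer_graph \<Gamma>0"
  shows "\<exists>(G1 :: nat monoid) W1 (G2 :: nat monoid) W2 (G3 :: nat monoid) W3.
           tower_step \<Gamma>0 G1 W1 \<and>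
           tower_step (bg_cover \<Gamma>0 G1 W1) G2 W2 \<and>
           tower_step (bg_cover (bg_cover \<Gamma>0 G1 W1) G2 W2) G3 W3 \<and>
           (\<forall>\<mu> \<in> bg_verts (bg_cover (bg_cover (bg_cover \<Gamma>0 G1 W1) G2 W2) G3 W3).
              bg_mult (bg_cover (bg_cover (bg_cover \<Gamma>0 G1 W1) G2 W2) G3 W3) \<mu> = 1) \<and>
           \<not> has_loop (bg_cover (bg_cover (bg_cover \<Gamma>0 G1 W1) G2 W2) G3 W3) \<and>
           \<not> has_multiple_edges (bg_cover (bg_cover (bg_cover \<Gamma>0 G1 W1) G2 W2) G3 W3)"
proof -
  obtain G1 :: "nat monoid" and W1 where t1: "tower_step \<Gamma>0 G1 W1"
    and m1: "\<forall>\<mu> \<in> bg_verts (bg_cover \<Gamma>0 G1 W1). bg_mult (bg_cover \<Gamma>0 G1 W1) \<mu> = 1"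
    using constrA[OF assms] by blast
  have q1: "quantized_brauer_graph (bg_cover \<Gamma>0 G1 W1)" using t1 unfolding tower_step_def by simp
  obtain G2 :: "nat monoid" and W2 where t2: "tower_step (bg_cover \<Gamma>0 G1 W1) G2 W2"
    and m2: "\<forall>\<mu> \<in> bg_verts (bg_cover (bg_cover \<Gamma>0 G1 W1) G2 W2). bg_mult (bg_cover (bg_cover \<Gamma>0 G1 W1) G2 W2) \<mu> = 1"
    using constrB[OF q1 m1] by blast
  have q2: "quantized_brauer_graph (bg_cover (bg_cover \<Gamma>0 G1 W1) G2 W2)" using t2 unfolding tower_step_def by simp
  obtain G3 :: "nat monoid" and W3 where t3: "tower_step (bg_cover (bg_cover \<Gamma>0 G1 W1) G2 W2) G3 W3"
    and r3: "(\<forall>\<mu> \<in> bg_verts (bg_cover (bg_cover (bg_cover \<Gamma>0 G1 W1) G2 W2) G3 W3).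
              bg_mult (bg_cover (bg_cover (bg_cover \<Gamma>0 G1 W1) G2 W2) G3 W3) \<mu> = 1) \<and>
           \<not> has_loop (bg_cover (bg_cover (bg_cover \<Gamma>0 G1 W1) G2 W2) G3 W3) \<and>
           \<not> has_multiple_edges (bg_cover (bg_cover (bg_cover \<Gamma>0 G1 W1) G2 W2) G3 W3)"
    using constrB[OF q2 m2] by blast
  show ?thesis using t1 t2 t3 r3 by blast
qed

end
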